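(* Let $p$ be a prime with $p\equiv 1\pmod 3$, let $H_p=\mathrm{PSL}_2(F_p)$, let $A_p=\{(x_i)\in F_3^{p+1}\mid \sum_{i=1}^{p+1}x_i=0\}$ and $G_p=A_p\rtimes H_p$ (as defined in the context). Let $K$ be a group and let $N<G_p\times K$ be a subgroup which is normalized by $G_p\times\{e\}$. Then $N$ is equal to $\{e\}\times L$, $A_p\times L$ or $G_p\times L$, for some subgroup $L<K$.
   Context: $F_q$ denotes the field with $q$ elements. $\mathrm{PSL}_2(F_p)=\mathrm{SL}_2(F_p)/\{\pm I\}$ acts on the projective line $\mathrm{P}^1(F_p)=F_p\cup\{\infty\}$ by linear fractional transformations $\begin{pmatrix}a&b\\c&d\end{pmatrix}\cdot x=\frac{ax+b}{cx+d}$. This induces the permutational representation of $\mathrm{PSL}_2(F_p)$ on $F_3^{\mathrm{P}^1(F_p)}$ given by $g\cdot x=(x_{g^{-1}\cdot i})_{i\in\mathrm{P}^1(F_p)}$. One identifies $F_3^{\mathrm{P}^1(F_p)}$ with $F_3^{p+1}$ via a fixed bijection $\mathrm{P}^1(F_p)\rightarrow\{1,\dots,p+1\}$ sending $\infty$ to $p+1$. The subspace $A_p$ (vectors with coordinate sum $0$) is $H_p$-invariant, and $G_p=A_p\rtimes H_p$ is the corresponding semidirect product, with $A_p$ and $H_p$ viewed as subgroups of $G_p$. *)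

theory Defs
  imports "HOL-Computational_Algebra.Primes" "HOL-Algebra.Coset"
begin

text \<open>Elements of F_p are represented by integers in {0..<p}.
  A 2x2 matrix (a b; c d) is the tuple (a,b,c,d).\<close>

type_synonym mat2 = "int \<times> int \<times> int \<times> int"

fun mat_mult :: "nat \<Rightarrow> mat2 \<Rightarrow> mat2 \<Rightarrow> mat2" where
  "mat_mult p (a,b,c,d) (e,f,g,h) =
     ((a*e + b*g) mod int p, (a*f + b*h) mod int p,
      (c*e + d*g) mod int p, (c*f + d*h) mod int p)"

definition SL2 :: "nat \<Rightarrow> mat2 monoid" where
  "SL2 p = \<lparr> carrier = {(a,b,c,d). a \<in> {0..<int p} \<and> b \<in> {0..<int p} \<and> c \<in> {0..<int p}
                          \<and> d \<in> {0..<int p} \<and> (a*d - c*b) mod int p = 1 mod int p},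
             mult = mat_mult p,
             one = (1 mod int p, 0, 0, 1 mod int p) \<rparr>"

definition centre_pm :: "nat \<Rightarrow> mat2 set" where
  "centre_pm p = {(1 mod int p, 0, 0, 1 mod int p), ((-1) mod int p, 0, 0, (-1) mod int p)}"

definition PSL2 :: "nat \<Rightarrow> mat2 set monoid" where
  "PSL2 p = SL2 p Mod centre_pm p"

text \<open>P^1(F_p) = F_p \<union> {\<infinity>} is represented by {0..p} (natural numbers), where
  the point p stands for \<infinity>. (This is the fixed bijection P^1(F_p) \<rightarrow> {1,...,p+1},
  shifted by one, sending \<infinity> to the last index.)\<close>

definition fdiv :: "nat \<Rightarrow> int \<Rightarrow> int \<Rightarrow> nat" where
  "fdiv p u v = nat (THE y. y \<in> {0..<int p} \<and> (y * v) mod int p = u mod int p)"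

definition mobius :: "nat \<Rightarrow> mat2 \<Rightarrow> nat \<Rightarrow> nat" where
  "mobius p M x = (case M of (a,b,c,d) \<Rightarrow>
     if x = p then (if c mod int p = 0 then p else fdiv p a c)
     else (if (c * int x + d) mod int p = 0 then p
           else fdiv p (a * int x + b) (c * int x + d)))"

definition psl_act :: "nat \<Rightarrow> mat2 set \<Rightarrow> nat \<Rightarrow> nat" where
  "psl_act p g x = mobius p (SOME M. M \<in> g) x"

text \<open>Vectors in F_3^{P^1(F_p)}: functions with values in {0,1,2}, extended by 0
  outside the index set {0..p}.\<close>
definition A_p :: "nat \<Rightarrow> (nat \<Rightarrow> int) set" where
  "A_p p = {x. (\<forall>i. x i \<in> {0..<3}) \<and> (\<forall>i. i > p \<longrightarrow> x i = 0)
              \<and> (\<Sum>i\<le>p. x i) mod 3 = 0}"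

definition perm_act :: "nat \<Rightarrow> mat2 set \<Rightarrow> (nat \<Rightarrow> int) \<Rightarrow> (nat \<Rightarrow> int)" where
  "perm_act p g x = (\<lambda>i. if i \<le> p then x (psl_act p (inv\<^bsub>PSL2 p\<^esub> g) i) else 0)"

definition G_p :: "nat \<Rightarrow> ((nat \<Rightarrow> int) \<times> mat2 set) monoid" where
  "G_p p = \<lparr> carrier = A_p p \<times> carrier (PSL2 p),
            mult = (\<lambda>u v. ((\<lambda>i. (fst u i + perm_act p (snd u) (fst v) i) mod 3),
                             snd u \<otimes>\<^bsub>PSL2 p\<^esub> snd v)),
            one = (\<lambda>i. 0, \<one>\<^bsub>PSL2 p\<^esub>) \<rparr>"

definition A_sub :: "nat \<Rightarrow> ((nat \<Rightarrow> int) \<times> mat2 set) set" where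
  "A_sub p = A_p p \<times> {\<one>\<^bsub>PSL2 p\<^esub>}"

end

theory Submission
  imports Defs
begin


locale pp =
  fixes p :: nat
  assumes prime_p: "prime p" and p3: "p mod 3 = 1"
begin

lemma p_ge7: "p \<ge> 7"
proof (rule ccontr)
  assume "\<not> p \<ge> 7"
  hence "p \<in> {0,1,2,3,4,5,6}" by auto
  moreover have "p \<noteq> 0" "p \<noteq> 1"
    using prime_p by (auto simp: prime_nat_iff)
  moreover have "p \<noteq> 4"
  proof
    assume "p = 4" hence "(2::nat) dvd p" by simp
    hence "(2::nat) = 1 \<or> 2 = p" using prime_p unfolding prime_nat_iff by blast
    thus False using \<open>p = 4\<close> by simp
  qed
  moreover have "p \<noteq> 6"
  proof
    assume "p = 6" hence "(2::nat) dvd p" by simp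
    hence "(2::nat) = 1 \<or> 2 = p" using prime_p unfolding prime_nat_iff by blast
    thus False using \<open>p = 6\<close> by simp
  qed
  ultimately show False using p3 by auto
qed

lemma P_ge7: "int p \<ge> 7" using p_ge7 by simp

lemma primeP: "prime (int p)" using prime_p by simp

lemma pdvd_mult: "int p dvd a*b \<longleftrightarrow> int p dvd a \<or> int p dvd b"
  using primeP prime_dvd_mult_iff by blast

lemma small_ndvd: "0 < x \<Longrightarrow> x < int p \<Longrightarrow> \<not> int p dvd x"
  using zdvd_imp_le by fastforce

lemma ndvd_neg: "\<not> int p dvd (-x) \<longleftrightarrow> \<not> int p dvd x" by simp

lemma ndvd_consts: "\<not> int p dvd 1" "\<not> int p dvd 2" "\<not> int p dvd 3" "\<not> int p dvd 4"
  "\<not> int p dvd 5" "\<not> int p dvd 6"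
  using small_ndvd P_ge7 by auto

lemma ndvd_15: "\<not> int p dvd 15"
proof
  assume "int p dvd 15"
  hence "int p dvd 3 * 5" by simp
  thus False using pdvd_mult ndvd_consts by blast
qed

lemma inv_ex: "\<not> int p dvd c \<Longrightarrow> \<exists>ci. int p dvd (c*ci - 1)"
proof -
  assume "\<not> int p dvd c"
  hence "coprime (int p) c" using primeP prime_imp_coprime by blast
  then obtain u v where "u * int p + v * c = 1" using bezout_int[of "int p" c] by auto
  hence "c * v - 1 = int p * (-u)" by (simp add: algebra_simps)
  thus ?thesis by (metis dvd_triv_left dvd_minus_iff dvd_mult2 mult_minus_right)
qed

lemma modh: "(x mod m * (y mod m) + z mod m * (w mod m)) mod m = (x*y+z*w) mod (m::int)"
  by (metis mod_add_eq mod_mult_eq)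
lemma modh2: "(x mod m * (y mod m) - z mod m * (w mod m)) mod m = (x*y-z*w) mod (m::int)"
  by (metis mod_diff_eq mod_mult_eq)

definition mk :: "int \<Rightarrow> int \<Rightarrow> int \<Rightarrow> int \<Rightarrow> mat2" where
  "mk a b c d = (a mod int p, b mod int p, c mod int p, d mod int p)"

lemma mk_mult: "mat_mult p (mk a b c d) (mk e f g h) =
   mk (a*e+b*g) (a*f+b*h) (c*e+d*g) (c*f+d*h)"
  by (simp add: mk_def modh)

lemma mk_eq: "mk a b c d = mk a' b' c' d' \<longleftrightarrow>
   int p dvd (a - a') \<and> int p dvd (b - b') \<and> int p dvd (c - c') \<and> int p dvd (d - d')"
  by (simp add: mk_def mod_eq_dvd_iff)

lemma mk_in: "mk a b c d \<in> carrier (SL2 p) \<longleftrightarrow> int p dvd (a*d - c*b - 1)"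
proof -
  have "mk a b c d \<in> carrier (SL2 p) \<longleftrightarrow> (a mod int p * (d mod int p) - c mod int p * (b mod int p)) mod int p = 1 mod int p"
    using P_ge7 by (simp add: SL2_def mk_def)
  also have "\<dots> \<longleftrightarrow> (a*d - c*b) mod int p = 1 mod int p" by (simp only: modh2)
  also have "\<dots> \<longleftrightarrow> int p dvd (a*d - c*b - 1)" by (simp add: mod_eq_dvd_iff)
  finally show ?thesis .
qed

lemma SL2_elim:
  assumes "X \<in> carrier (SL2 p)"
  obtains a b c d where "X = mk a b c d" "int p dvd (a*d - c*b - 1)"
proof -
  obtain a b c d where X: "X = (a,b,c,d)" by (cases X) auto
  have r: "a mod int p = a" "b mod int p = b" "c mod int p = c" "d mod int p = d"
    using assms X by (auto simp: SL2_def)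
  have "X = mk a b c d" using X r by (simp add: mk_def)
  moreover have "mk a b c d \<in> carrier (SL2 p)" using assms calculation by simp
  ultimately show ?thesis using that mk_in by blast
qed

lemma SL2_one: "\<one>\<^bsub>SL2 p\<^esub> = mk 1 0 0 1" by (simp add: SL2_def mk_def)
lemma SL2_mult: "X \<otimes>\<^bsub>SL2 p\<^esub> Y = mat_mult p X Y" by (simp add: SL2_def)

lemma SL2_group: "group (SL2 p)"
proof (rule groupI)
  fix x y assume "x \<in> carrier (SL2 p)" "y \<in> carrier (SL2 p)"
  then obtain a b c d e f g h where x: "x = mk a b c d" "int p dvd (a*d - c*b - 1)"
    and y: "y = mk e f g h" "int p dvd (e*h - g*f - 1)" by (metis SL2_elim)
  have "int p dvd ((a*e+b*g)*(c*f+d*h) - (c*e+d*g)*(a*f+b*h) - 1)"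
    using x(2) y(2) by algebra
  thus "x \<otimes>\<^bsub>SL2 p\<^esub> y \<in> carrier (SL2 p)" using x y by (simp add: SL2_mult mk_mult mk_in)
next
  show "\<one>\<^bsub>SL2 p\<^esub> \<in> carrier (SL2 p)" by (simp add: SL2_one mk_in)
next
  fix x y z assume "x \<in> carrier (SL2 p)" "y \<in> carrier (SL2 p)" "z \<in> carrier (SL2 p)"
  then obtain a b c d e f g h i j k l where "x = mk a b c d" "y = mk e f g h" "z = mk i j k l"
    by (metis SL2_elim)
  thus "x \<otimes>\<^bsub>SL2 p\<^esub> y \<otimes>\<^bsub>SL2 p\<^esub> z = x \<otimes>\<^bsub>SL2 p\<^esub> (y \<otimes>\<^bsub>SL2 p\<^esub> z)"
    by (simp add: SL2_mult mk_mult algebra_simps)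
next
  fix x assume "x \<in> carrier (SL2 p)"
  then obtain a b c d where x: "x = mk a b c d" "int p dvd (a*d - c*b - 1)" by (metis SL2_elim)
  thus "\<one>\<^bsub>SL2 p\<^esub> \<otimes>\<^bsub>SL2 p\<^esub> x = x" by (simp add: SL2_mult SL2_one mk_mult)
next
  fix x assume "x \<in> carrier (SL2 p)"
  then obtain a b c d where x: "x = mk a b c d" "int p dvd (a*d - c*b - 1)" by (metis SL2_elim)
  have "mk d (-b) (-c) a \<in> carrier (SL2 p)" using x(2) by (simp add: mk_in algebra_simps)
  moreover have "mk d (-b) (-c) a \<otimes>\<^bsub>SL2 p\<^esub> x = \<one>\<^bsub>SL2 p\<^esub>"
    unfolding x(1) SL2_mult mk_mult SL2_one mk_eq
    by (insert x(2), intro conjI; ((simp add: algebra_simps; fail) | algebra))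
  ultimately show "\<exists>y\<in>carrier (SL2 p). y \<otimes>\<^bsub>SL2 p\<^esub> x = \<one>\<^bsub>SL2 p\<^esub>" by blast
qed

end


context pp begin

lemma modP_dvd: "int p dvd (x mod int p - x)"
  by (metis dvd_minus_iff minus_diff_eq mod_eq_dvd_iff mod_mod_trivial)

lemma SL2_inv:
  assumes "int p dvd (a*d - c*b - 1)"
  shows "inv\<^bsub>SL2 p\<^esub> (mk a b c d) = mk d (-b) (-c) a"
proof -
  interpret G: group "SL2 p" by (rule SL2_group)
  have i: "mk d (-b) (-c) a \<in> carrier (SL2 p)" using assms by (simp add: mk_in algebra_simps)
  have m: "mk a b c d \<in> carrier (SL2 p)" using assms by (simp add: mk_in)
  have "mk d (-b) (-c) a \<otimes>\<^bsub>SL2 p\<^esub> mk a b c d = \<one>\<^bsub>SL2 p\<^esub>"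
    unfolding SL2_mult mk_mult SL2_one mk_eq
    by (insert assms, intro conjI; ((simp add: algebra_simps; fail) | algebra))
  thus ?thesis using G.inv_equality i m by blast
qed

definition scal :: "int \<Rightarrow> mat2" where "scal s = mk s 0 0 s"

lemma centre_eq: "centre_pm p = {scal 1, scal (-1)}"
  by (simp add: centre_pm_def scal_def mk_def)

lemma centre_normal: "centre_pm p \<lhd> SL2 p"
proof -
  interpret G: group "SL2 p" by (rule SL2_group)
  have sub: "subgroup (centre_pm p) (SL2 p)"
  proof (rule G.subgroupI)
    have "int p dvd (1*1 - 0*0 - 1)" "int p dvd ((-1)*(-1) - 0*0 - 1)" by simp_all
    thus "centre_pm p \<subseteq> carrier (SL2 p)" unfolding centre_eq scal_def by (simp add: mk_in)
    show "centre_pm p \<noteq> {}" by (simp add: centre_eq)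
  next
    fix x assume "x \<in> centre_pm p"
    then obtain s where s: "x = mk s 0 0 s" "s = 1 \<or> s = -1" by (auto simp: centre_eq scal_def)
    have d: "int p dvd (s*s - 0*0 - 1)" using s(2) by auto
    have "inv\<^bsub>SL2 p\<^esub> x = mk s (-0) (-0) s" unfolding s(1) by (rule SL2_inv[OF d])
    thus "inv\<^bsub>SL2 p\<^esub> x \<in> centre_pm p" using s(2) by (auto simp: centre_eq scal_def)
  next
    fix x y assume "x \<in> centre_pm p" "y \<in> centre_pm p"
    then obtain s t where s: "x = mk s 0 0 s" "s = 1 \<or> s = -1" "y = mk t 0 0 t" "t = 1 \<or> t = -1"
      by (auto simp: centre_eq scal_def)
    have "x \<otimes>\<^bsub>SL2 p\<^esub> y = mk (s*t) 0 0 (s*t)" unfolding s SL2_mult mk_mult by simp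
    thus "x \<otimes>\<^bsub>SL2 p\<^esub> y \<in> centre_pm p" using s(2,4) by (auto simp: centre_eq scal_def)
  qed
  have conj: "\<forall>x\<in>carrier (SL2 p). \<forall>h\<in>centre_pm p. x \<otimes>\<^bsub>SL2 p\<^esub> h \<otimes>\<^bsub>SL2 p\<^esub> inv\<^bsub>SL2 p\<^esub> x \<in> centre_pm p"
  proof (intro ballI)
    fix x h assume x: "x \<in> carrier (SL2 p)" and h: "h \<in> centre_pm p"
    obtain a b c d where xe: "x = mk a b c d" "int p dvd (a*d - c*b - 1)" using x SL2_elim by blast
    obtain s where hs: "h = scal s" "s = 1 \<or> s = -1" using h by (auto simp: centre_eq)
    have "x \<otimes>\<^bsub>SL2 p\<^esub> h \<otimes>\<^bsub>SL2 p\<^esub> inv\<^bsub>SL2 p\<^esub> x = scal s"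
      unfolding xe(1) SL2_inv[OF xe(2)] hs(1) scal_def SL2_mult mk_mult mk_eq
      by (insert xe(2), intro conjI; ((simp add: algebra_simps; fail) | algebra))
    thus "x \<otimes>\<^bsub>SL2 p\<^esub> h \<otimes>\<^bsub>SL2 p\<^esub> inv\<^bsub>SL2 p\<^esub> x \<in> centre_pm p"
      using hs by (auto simp: centre_eq)
  qed
  show ?thesis by (intro G.normal_inv_iff[THEN iffD2] conjI sub conj)
qed

lemma PSL2_group: "group (PSL2 p)"
  unfolding PSL2_def by (rule normal.factorgroup_is_group[OF centre_normal])

abbreviation cls :: "mat2 \<Rightarrow> mat2 set" where
  "cls X \<equiv> centre_pm p #>\<^bsub>SL2 p\<^esub> X"

lemma PSL2_carrier: "carrier (PSL2 p) = cls ` carrier (SL2 p)"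
  by (simp add: PSL2_def carrier_FactGroup)

lemma PSL2_mult: "X \<in> carrier (SL2 p) \<Longrightarrow> Y \<in> carrier (SL2 p) \<Longrightarrow>
   cls X \<otimes>\<^bsub>PSL2 p\<^esub> cls Y = cls (X \<otimes>\<^bsub>SL2 p\<^esub> Y)"
  by (simp add: PSL2_def normal.rcos_sum[OF centre_normal])

lemma PSL2_one: "\<one>\<^bsub>PSL2 p\<^esub> = cls \<one>\<^bsub>SL2 p\<^esub>"
proof -
  interpret N: normal "centre_pm p" "SL2 p" by (rule centre_normal)
  have "\<one>\<^bsub>SL2 p\<^esub> \<in> centre_pm p" by (simp add: centre_eq scal_def SL2_one)
  thus ?thesis by (simp add: PSL2_def N.rcos_const)
qed

lemma PSL2_inv: "X \<in> carrier (SL2 p) \<Longrightarrow> inv\<^bsub>PSL2 p\<^esub> (cls X) = cls (inv\<^bsub>SL2 p\<^esub> X)"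
proof -
  assume X: "X \<in> carrier (SL2 p)"
  interpret N: normal "centre_pm p" "SL2 p" by (rule centre_normal)
  have c: "cls X \<in> carrier (SL2 p Mod centre_pm p)" using X by (simp add: carrier_FactGroup)
  have "inv\<^bsub>SL2 p Mod centre_pm p\<^esub> (cls X) = set_inv\<^bsub>SL2 p\<^esub> (cls X)" by (rule N.inv_FactGroup[OF c])
  also have "\<dots> = cls (inv\<^bsub>SL2 p\<^esub> X)" by (rule N.rcos_inv[OF X])
  finally show ?thesis unfolding PSL2_def .
qed

lemma cls_one_iff: "X \<in> carrier (SL2 p) \<Longrightarrow> cls X = centre_pm p \<longleftrightarrow> X \<in> centre_pm p"
proof -
  assume X: "X \<in> carrier (SL2 p)"
  interpret N: normal "centre_pm p" "SL2 p" by (rule centre_normal)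
  show ?thesis
  proof
    assume "cls X = centre_pm p"
    moreover have "X \<in> cls X" by (rule N.rcos_self[OF X N.subgroup_axioms])
    ultimately show "X \<in> centre_pm p" by simp
  next
    assume "X \<in> centre_pm p" thus "cls X = centre_pm p" by (rule N.rcos_const[OF SL2_group])
  qed
qed

lemma cls_elem: "X \<in> carrier (SL2 p) \<Longrightarrow> M \<in> cls X \<Longrightarrow> \<exists>s. (s = 1 \<or> s = -1) \<and> M = scal s \<otimes>\<^bsub>SL2 p\<^esub> X"
  unfolding r_coset_def centre_eq by auto

end


context pp begin

lemma range_eq: "0 \<le> y1 \<Longrightarrow> y1 < int p \<Longrightarrow> 0 \<le> y2 \<Longrightarrow> y2 < int p \<Longrightarrow> int p dvd (y1 - y2) \<Longrightarrow> y1 = y2"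
  by (metis mod_eq_dvd_iff mod_pos_pos_trivial)

lemma fdiv_prop:
  assumes "\<not> int p dvd v"
  shows "fdiv p u v < p \<and> int p dvd (int (fdiv p u v) * v - u)"
proof -
  obtain vi where vi: "int p dvd (v*vi - 1)" using inv_ex assms by blast
  define y0 where "y0 = (u*vi) mod int p"
  have y0r: "y0 \<in> {0..<int p}" using P_ge7 by (simp add: y0_def)
  have "int p dvd (y0 - u*vi)" unfolding y0_def by (rule modP_dvd)
  hence "int p dvd (y0 * v - u)" using vi by algebra
  hence y0p: "(y0 * v) mod int p = u mod int p" by (simp add: mod_eq_dvd_iff)
  have ex1: "\<exists>!y. y \<in> {0..<int p} \<and> (y * v) mod int p = u mod int p"
  proof (rule ex1I[of _ y0])
    show "y0 \<in> {0..<int p} \<and> y0 * v mod int p = u mod int p" using y0r y0p by simp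
  next
    fix y assume y: "y \<in> {0..<int p} \<and> y * v mod int p = u mod int p"
    hence "int p dvd (y*v - y0*v)" using y0p by (simp add: mod_eq_dvd_iff[symmetric])
    hence "int p dvd ((y - y0)*v)" by (simp add: algebra_simps)
    hence "int p dvd (y - y0)" using assms pdvd_mult by blast
    thus "y = y0" using y y0r range_eq by auto
  qed
  define t where "t = (THE y. y \<in> {0..<int p} \<and> (y * v) mod int p = u mod int p)"
  have t: "t \<in> {0..<int p} \<and> (t * v) mod int p = u mod int p"
    unfolding t_def by (rule theI'[OF ex1])
  have "fdiv p u v = nat t" by (simp add: fdiv_def t_def)
  moreover have "int (nat t) = t" using t by simp
  ultimately show ?thesis using t by (auto simp: mod_eq_dvd_iff)
qed

definition pu :: "nat \<Rightarrow> int" where "pu y = (if y = p then 1 else int y)"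
definition pw :: "nat \<Rightarrow> int" where "pw y = (if y = p then 0 else 1)"

lemma P_not_unit: "\<not> int p dvd 1" using ndvd_consts(1) by simp

lemma mob_char:
  assumes det: "int p dvd (a*d - c*b - 1)" and x: "x \<le> p"
  shows "mobius p (mk a b c d) x \<le> p \<and> (\<exists>l. \<not> int p dvd l \<and>
     int p dvd (a * pu x + b * pw x - l * pu (mobius p (mk a b c d) x)) \<and>
     int p dvd (c * pu x + d * pw x - l * pw (mobius p (mk a b c d) x)))"
proof -
  define a' where "a' = a mod int p"
  define b' where "b' = b mod int p"
  define c' where "c' = c mod int p"
  define d' where "d' = d mod int p"
  have r: "int p dvd (a' - a)" "int p dvd (b' - b)" "int p dvd (c' - c)" "int p dvd (d' - d)"
    unfolding a'_def b'_def c'_def d'_def by (rule modP_dvd)+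
  have mob: "mobius p (mk a b c d) x = (if x = p then (if c' mod int p = 0 then p else fdiv p a' c')
     else (if (c' * int x + d') mod int p = 0 then p
           else fdiv p (a' * int x + b') (c' * int x + d')))"
    by (simp add: mobius_def mk_def a'_def b'_def c'_def d'_def)
  show ?thesis
  proof (cases "x = p")
    case True
    hence pux: "pu x = 1" "pw x = 0" by (simp_all add: pu_def pw_def)
    show ?thesis
    proof (cases "int p dvd c")
      case True
      hence m: "mobius p (mk a b c d) x = p" using mob \<open>x = p\<close> by (simp add: c'_def)
      have "\<not> int p dvd a"
      proof
        assume "int p dvd a"
        hence "int p dvd 1" using det True by algebra
        thus False using P_not_unit by simp
      qed
      moreover have "int p dvd (a * pu x + b * pw x - a * pu p)" "int p dvd (c * pu x + d * pw x - a * pw p)"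
        using pux True by (simp_all add: pu_def pw_def)
      ultimately show ?thesis using m by auto
    next
      case False
      have c'nz: "\<not> int p dvd c'"
      proof
        assume "int p dvd c'"
        hence "int p dvd c" using r(3) by algebra
        thus False using False by simp
      qed
      hence c'm: "c' mod int p \<noteq> 0" by (simp add: dvd_eq_mod_eq_0)
      define y where "y = fdiv p a' c'"
      have m: "mobius p (mk a b c d) x = y" using mob \<open>x = p\<close> c'm by (simp add: y_def)
      have y: "y < p" "int p dvd (int y * c' - a')" using fdiv_prop[OF c'nz] by (simp_all add: y_def)
      have pu: "pu y = int y" "pw y = 1" using y(1) by (simp_all add: pu_def pw_def)
      have A: "int p dvd (a * 1 + b * 0 - c * int y)" using y(2) r by algebra
      show ?thesis unfolding m pu pux using y(1) False A by (auto intro!: exI[of _ c])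
    qed
  next
    case False
    hence xp: "x < p" using x by simp
    hence pux: "pu x = int x" "pw x = 1" by (simp_all add: pu_def pw_def)
    have eqv: "(c' * int x + d') mod int p = 0 \<longleftrightarrow> int p dvd (c * int x + d)"
    proof -
      have 1: "int p dvd ((c' * int x + d') - (c * int x + d))" using r by algebra
      have "int p dvd (c' * int x + d') \<longleftrightarrow> int p dvd (c * int x + d)"
      proof
        assume "int p dvd (c' * int x + d')" thus "int p dvd (c * int x + d)" using 1 by algebra
      next
        assume "int p dvd (c * int x + d)" thus "int p dvd (c' * int x + d')" using 1 by algebra
      qed
      thus ?thesis by (simp add: dvd_eq_mod_eq_0)
    qed
    show ?thesis
    proof (cases "int p dvd (c * int x + d)")
      case True
      hence m: "mobius p (mk a b c d) x = p" using mob False eqv by simp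
      have "\<not> int p dvd (a * int x + b)"
      proof
        assume "int p dvd (a * int x + b)"
        hence "int p dvd 1" using det True by algebra
        thus False using P_not_unit by simp
      qed
      moreover have "int p dvd (a * pu x + b * pw x - (a * int x + b) * pu p)"
         "int p dvd (c * pu x + d * pw x - (a * int x + b) * pw p)"
        using pux True by (simp_all add: pu_def pw_def)
      ultimately show ?thesis using m by auto
    next
      case nd: False
      have nz: "\<not> int p dvd (c' * int x + d')"
      proof
        assume "int p dvd (c' * int x + d')"
        hence "int p dvd (c * int x + d)" using r by algebra
        thus False using nd by simp
      qed
      define y where "y = fdiv p (a' * int x + b') (c' * int x + d')"
      have m: "mobius p (mk a b c d) x = y" using mob False eqv nd by (simp add: y_def)
      have y: "y < p" "int p dvd (int y * (c' * int x + d') - (a' * int x + b'))"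
        using fdiv_prop[OF nz] by (simp_all add: y_def)
      have pu: "pu y = int y" "pw y = 1" using y(1) by (simp_all add: pu_def pw_def)
      have A: "int p dvd (a * int x + b * 1 - (c * int x + d) * int y)" using y(2) r by algebra
      show ?thesis unfolding m pu pux using y(1) nd A by (auto intro!: exI[of _ "c * int x + d"])
    qed
  qed
qed

lemma pv_unique:
  assumes "y \<le> p" "y' \<le> p" "\<not> int p dvd l" "\<not> int p dvd l'"
    "int p dvd (l * pu y - l' * pu y')" "int p dvd (l * pw y - l' * pw y')"
  shows "y = y'"
proof (cases "y = p")
  case True
  show ?thesis
  proof (rule ccontr)
    assume "y \<noteq> y'"
    hence "pw y' = 1" using True by (simp add: pw_def)
    hence "int p dvd l'" using assms(6) True by (simp add: pw_def)
    thus False using assms(4) by simp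
  qed
next
  case False
  show ?thesis
  proof (cases "y' = p")
    case True
    hence "int p dvd l" using assms(6) False by (simp add: pw_def)
    thus ?thesis using assms(3) by simp
  next
    case F2: False
    have "int p dvd (l * int y - l' * int y')" "int p dvd (l - l')"
      using assms(5,6) False F2 by (simp_all add: pu_def pw_def)
    hence "int p dvd l * (int y - int y')" by algebra
    hence "int p dvd (int y - int y')" using assms(3) pdvd_mult by blast
    thus ?thesis using range_eq[of "int y" "int y'"] False F2 assms(1,2) by simp
  qed
qed

lemma mob_eq:
  assumes det: "int p dvd (a*d - c*b - 1)" and x: "x \<le> p" and y: "y \<le> p" and l: "\<not> int p dvd l"
    and e1: "int p dvd (a * pu x + b * pw x - l * pu y)"
    and e2: "int p dvd (c * pu x + d * pw x - l * pw y)"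
  shows "mobius p (mk a b c d) x = y"
proof -
  obtain l' where m: "mobius p (mk a b c d) x \<le> p" "\<not> int p dvd l'"
     "int p dvd (a * pu x + b * pw x - l' * pu (mobius p (mk a b c d) x))"
     "int p dvd (c * pu x + d * pw x - l' * pw (mobius p (mk a b c d) x))"
    using mob_char[OF det x] by blast
  have "int p dvd (l' * pu (mobius p (mk a b c d) x) - l * pu y)" using m(3) e1 by algebra
  moreover have "int p dvd (l' * pw (mobius p (mk a b c d) x) - l * pw y)" using m(4) e2 by algebra
  ultimately show ?thesis using pv_unique[OF m(1) y m(2) l] by blast
qed

lemma mob_mult:
  assumes d1: "int p dvd (a*d - c*b - 1)" and d2: "int p dvd (e*h - g*f - 1)" and x: "x \<le> p"
  shows "mobius p (mat_mult p (mk a b c d) (mk e f g h)) x = mobius p (mk a b c d) (mobius p (mk e f g h) x)"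
proof -
  define y where "y = mobius p (mk e f g h) x"
  obtain l1 where 1: "y \<le> p" "\<not> int p dvd l1" "int p dvd (e * pu x + f * pw x - l1 * pu y)"
    "int p dvd (g * pu x + h * pw x - l1 * pw y)" using mob_char[OF d2 x] unfolding y_def by blast
  define z where "z = mobius p (mk a b c d) y"
  obtain l2 where 2: "z \<le> p" "\<not> int p dvd l2" "int p dvd (a * pu y + b * pw y - l2 * pu z)"
    "int p dvd (c * pu y + d * pw y - l2 * pw z)" using mob_char[OF d1 1(1)] unfolding z_def by blast
  have det: "int p dvd ((a*e+b*g)*(c*f+d*h) - (c*e+d*g)*(a*f+b*h) - 1)" using d1 d2 by algebra
  have nz: "\<not> int p dvd (l1 * l2)" using 1(2) 2(2) pdvd_mult by blast
  have "int p dvd ((a*e+b*g) * pu x + (a*f+b*h) * pw x - (l1*l2) * pu z)" using 1(3,4) 2(3,4) by algebra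
  moreover have "int p dvd ((c*e+d*g) * pu x + (c*f+d*h) * pw x - (l1*l2) * pw z)" using 1(3,4) 2(3,4) by algebra
  ultimately have "mobius p (mk (a*e+b*g) (a*f+b*h) (c*e+d*g) (c*f+d*h)) x = z"
    using mob_eq[OF det x 2(1) nz] by blast
  thus ?thesis unfolding mk_mult z_def y_def .
qed

lemma mob_one: "x \<le> p \<Longrightarrow> mobius p (mk 1 0 0 1) x = x"
  using p_ge7 by (intro mob_eq[where l=1]) (simp_all add: P_not_unit)

lemma mob_scal:
  assumes det: "int p dvd (a*d - c*b - 1)" and x: "x \<le> p" and s: "s = 1 \<or> s = -1"
  shows "mobius p (mat_mult p (scal s) (mk a b c d)) x = mobius p (mk a b c d) x"
proof -
  obtain l where m: "mobius p (mk a b c d) x \<le> p" "\<not> int p dvd l"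
     "int p dvd (a * pu x + b * pw x - l * pu (mobius p (mk a b c d) x))"
     "int p dvd (c * pu x + d * pw x - l * pw (mobius p (mk a b c d) x))"
    using mob_char[OF det x] by blast
  have ss: "s * s = 1" using s by auto
  have det2: "int p dvd ((s*a+0*c)*(0*b+s*d) - (0*a+s*c)*(s*b+0*d) - 1)" using det ss by algebra
  have nz: "\<not> int p dvd (s*l)" using m(2) s by auto
  have "mobius p (mk (s*a+0*c) (s*b+0*d) (0*a+s*c) (0*b+s*d)) x = mobius p (mk a b c d) x"
    by (rule mob_eq[OF det2 x m(1) nz]) (use m(3,4) in algebra)+
  thus ?thesis by (simp add: scal_def mk_mult)
qed

end


context pp begin

lemma mobS_range: "X \<in> carrier (SL2 p) \<Longrightarrow> x \<le> p \<Longrightarrow> mobius p X x \<le> p"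
  by (metis SL2_elim mob_char)

lemma mobS_mult: "X \<in> carrier (SL2 p) \<Longrightarrow> Y \<in> carrier (SL2 p) \<Longrightarrow> x \<le> p \<Longrightarrow>
   mobius p (X \<otimes>\<^bsub>SL2 p\<^esub> Y) x = mobius p X (mobius p Y x)"
  by (metis SL2_elim SL2_mult mob_mult)

lemma mobS_one: "x \<le> p \<Longrightarrow> mobius p \<one>\<^bsub>SL2 p\<^esub> x = x"
  by (simp add: SL2_one mob_one)

lemma psl_act_cls:
  assumes X: "X \<in> carrier (SL2 p)" and x: "x \<le> p"
  shows "psl_act p (cls X) x = mobius p X x"
proof -
  interpret G: group "SL2 p" by (rule SL2_group)
  interpret N: normal "centre_pm p" "SL2 p" by (rule centre_normal)
  have "X \<in> cls X" by (rule G.rcos_self[OF X N.subgroup_axioms])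
  hence "(SOME M. M \<in> cls X) \<in> cls X" by (rule someI)
  then obtain s where s: "s = 1 \<or> s = -1" "(SOME M. M \<in> cls X) = scal s \<otimes>\<^bsub>SL2 p\<^esub> X"
    using cls_elem[OF X] by blast
  obtain a b c d where Xe: "X = mk a b c d" "int p dvd (a*d - c*b - 1)" using X SL2_elim by blast
  show ?thesis unfolding psl_act_def s(2) unfolding Xe(1) SL2_mult
    by (rule mob_scal[OF Xe(2) x s(1)])
qed

lemma PSL2_elim:
  assumes "g \<in> carrier (PSL2 p)"
  obtains X where "X \<in> carrier (SL2 p)" "g = cls X"
  using assms PSL2_carrier by auto

lemma psl_range: "g \<in> carrier (PSL2 p) \<Longrightarrow> x \<le> p \<Longrightarrow> psl_act p g x \<le> p"
  by (metis PSL2_elim psl_act_cls mobS_range)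

lemma psl_mult:
  assumes g: "g \<in> carrier (PSL2 p)" and h: "h \<in> carrier (PSL2 p)" and x: "x \<le> p"
  shows "psl_act p (g \<otimes>\<^bsub>PSL2 p\<^esub> h) x = psl_act p g (psl_act p h x)"
proof -
  interpret G: group "SL2 p" by (rule SL2_group)
  obtain X where X: "X \<in> carrier (SL2 p)" "g = cls X" using g PSL2_elim by blast
  obtain Y where Y: "Y \<in> carrier (SL2 p)" "h = cls Y" using h PSL2_elim by blast
  have "psl_act p (g \<otimes>\<^bsub>PSL2 p\<^esub> h) x = mobius p (X \<otimes>\<^bsub>SL2 p\<^esub> Y) x"
    unfolding X(2) Y(2) PSL2_mult[OF X(1) Y(1)] by (rule psl_act_cls[OF G.m_closed[OF X(1) Y(1)] x])
  also have "\<dots> = mobius p X (mobius p Y x)" by (rule mobS_mult[OF X(1) Y(1) x])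
  also have "\<dots> = psl_act p g (psl_act p h x)"
    unfolding X(2) Y(2) psl_act_cls[OF Y(1) x] psl_act_cls[OF X(1) mobS_range[OF Y(1) x]] ..
  finally show ?thesis .
qed

lemma psl_one: "x \<le> p \<Longrightarrow> psl_act p \<one>\<^bsub>PSL2 p\<^esub> x = x"
proof -
  interpret G: group "SL2 p" by (rule SL2_group)
  assume x: "x \<le> p"
  show ?thesis unfolding PSL2_one psl_act_cls[OF G.one_closed x] by (rule mobS_one[OF x])
qed

lemma psl_inv_l:
  assumes g: "g \<in> carrier (PSL2 p)" and x: "x \<le> p"
  shows "psl_act p (inv\<^bsub>PSL2 p\<^esub> g) (psl_act p g x) = x"
proof -
  interpret H: group "PSL2 p" by (rule PSL2_group)
  have "psl_act p (inv\<^bsub>PSL2 p\<^esub> g) (psl_act p g x) = psl_act p (inv\<^bsub>PSL2 p\<^esub> g \<otimes>\<^bsub>PSL2 p\<^esub> g) x"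
    using psl_mult[OF H.inv_closed[OF g] g x] by simp
  also have "\<dots> = x" using H.l_inv[OF g] psl_one[OF x] by simp
  finally show ?thesis .
qed

lemma psl_inv_r:
  assumes g: "g \<in> carrier (PSL2 p)" and x: "x \<le> p"
  shows "psl_act p g (psl_act p (inv\<^bsub>PSL2 p\<^esub> g) x) = x"
proof -
  interpret H: group "PSL2 p" by (rule PSL2_group)
  have "psl_act p g (psl_act p (inv\<^bsub>PSL2 p\<^esub> g) x) = psl_act p (g \<otimes>\<^bsub>PSL2 p\<^esub> inv\<^bsub>PSL2 p\<^esub> g) x"
    using psl_mult[OF g H.inv_closed[OF g] x] by simp
  also have "\<dots> = x" using H.r_inv[OF g] psl_one[OF x] by simp
  finally show ?thesis .
qed

lemma psl_bij: "g \<in> carrier (PSL2 p) \<Longrightarrow> bij_betw (psl_act p g) {..p} {..p}"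
proof -
  interpret H: group "PSL2 p" by (rule PSL2_group)
  assume g: "g \<in> carrier (PSL2 p)"
  show ?thesis
    by (rule bij_betwI[where g="psl_act p (inv\<^bsub>PSL2 p\<^esub> g)"])
       (auto simp: Pi_def psl_range g psl_inv_l psl_inv_r)
qed

lemma pa_app: "perm_act p g x i = (if i \<le> p then x (psl_act p (inv\<^bsub>PSL2 p\<^esub> g) i) else 0)"
  by (simp add: perm_act_def)

lemma pa_mult:
  assumes g: "g \<in> carrier (PSL2 p)" and h: "h \<in> carrier (PSL2 p)"
  shows "perm_act p (g \<otimes>\<^bsub>PSL2 p\<^esub> h) x = perm_act p g (perm_act p h x)"
proof
  interpret H: group "PSL2 p" by (rule PSL2_group)
  fix i
  show "perm_act p (g \<otimes>\<^bsub>PSL2 p\<^esub> h) x i = perm_act p g (perm_act p h x) i"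
  proof (cases "i \<le> p")
    case True
    have "psl_act p (inv\<^bsub>PSL2 p\<^esub> (g \<otimes>\<^bsub>PSL2 p\<^esub> h)) i
        = psl_act p (inv\<^bsub>PSL2 p\<^esub> h) (psl_act p (inv\<^bsub>PSL2 p\<^esub> g) i)"
      using H.inv_mult_group[OF g h] psl_mult[OF H.inv_closed[OF h] H.inv_closed[OF g] True] by simp
    moreover have "psl_act p (inv\<^bsub>PSL2 p\<^esub> g) i \<le> p" using psl_range[OF H.inv_closed[OF g] True] .
    ultimately show ?thesis using True by (simp add: pa_app)
  qed (simp add: pa_app)
qed

lemma pa_one: "(\<forall>i>p. x i = 0) \<Longrightarrow> perm_act p \<one>\<^bsub>PSL2 p\<^esub> x = x"
proof -
  interpret H: group "PSL2 p" by (rule PSL2_group)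
  assume "\<forall>i>p. x i = 0"
  thus ?thesis by (auto simp: pa_app psl_one fun_eq_iff)
qed

lemma pa_sum:
  assumes g: "g \<in> carrier (PSL2 p)"
  shows "(\<Sum>i\<le>p. perm_act p g x i) = (\<Sum>i\<le>p. x i)"
proof -
  interpret H: group "PSL2 p" by (rule PSL2_group)
  have "(\<Sum>i\<le>p. perm_act p g x i) = (\<Sum>i\<le>p. x (psl_act p (inv\<^bsub>PSL2 p\<^esub> g) i))"
    by (simp add: pa_app)
  also have "\<dots> = (\<Sum>i\<le>p. x i)"
    by (rule sum.reindex_bij_betw[OF psl_bij[OF H.inv_closed[OF g]]])
  finally show ?thesis .
qed

lemma pa_A: "g \<in> carrier (PSL2 p) \<Longrightarrow> x \<in> A_p p \<Longrightarrow> perm_act p g x \<in> A_p p"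
  unfolding A_p_def using pa_sum by (auto simp: pa_app)

end


context pp begin

lemma G_mult: "(x,h) \<otimes>\<^bsub>G_p p\<^esub> (y,k) = ((\<lambda>i. (x i + perm_act p h y i) mod 3), h \<otimes>\<^bsub>PSL2 p\<^esub> k)"
  by (simp add: G_p_def)
lemma G_one: "\<one>\<^bsub>G_p p\<^esub> = (\<lambda>i. 0, \<one>\<^bsub>PSL2 p\<^esub>)" by (simp add: G_p_def)
lemma G_carrier: "carrier (G_p p) = A_p p \<times> carrier (PSL2 p)" by (simp add: G_p_def)

lemma A_vals: "x \<in> A_p p \<Longrightarrow> 0 \<le> x i \<and> x i < 3" by (auto simp: A_p_def)
lemma A_out: "x \<in> A_p p \<Longrightarrow> i > p \<Longrightarrow> x i = 0" by (auto simp: A_p_def)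
lemma A_sum: "x \<in> A_p p \<Longrightarrow> (\<Sum>i\<le>p. x i) mod 3 = 0" by (auto simp: A_p_def)
lemma A_mod: "x \<in> A_p p \<Longrightarrow> x i mod 3 = x i" using A_vals by simp

lemma A_I: "(\<And>i. 0 \<le> x i \<and> x i < 3) \<Longrightarrow> (\<And>i. i > p \<Longrightarrow> x i = 0) \<Longrightarrow> (\<Sum>i\<le>p. x i) mod 3 = 0 \<Longrightarrow> x \<in> A_p p"
  by (auto simp: A_p_def)

lemma A_add: "x \<in> A_p p \<Longrightarrow> y \<in> A_p p \<Longrightarrow> (\<lambda>i. (x i + y i) mod 3) \<in> A_p p"
proof (rule A_I)
  assume x: "x \<in> A_p p" and y: "y \<in> A_p p"
  show "\<And>i. 0 \<le> (x i + y i) mod 3 \<and> (x i + y i) mod 3 < 3" by simp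
  show "\<And>i. i > p \<Longrightarrow> (x i + y i) mod 3 = 0" using x y by (simp add: A_out)
  have "(\<Sum>i\<le>p. (x i + y i) mod 3) mod 3 = (\<Sum>i\<le>p. x i + y i) mod 3" by (rule mod_sum_eq)
  also have "\<dots> = ((\<Sum>i\<le>p. x i) + (\<Sum>i\<le>p. y i)) mod 3" by (simp add: sum.distrib)
  also have "\<dots> = ((\<Sum>i\<le>p. x i) mod 3 + (\<Sum>i\<le>p. y i) mod 3) mod 3" by (simp add: mod_add_eq)
  also have "\<dots> = 0" using A_sum[OF x] A_sum[OF y] by simp
  finally show "(\<Sum>i\<le>p. (x i + y i) mod 3) mod 3 = 0" .
qed

lemma A_neg: "x \<in> A_p p \<Longrightarrow> (\<lambda>i. (- x i) mod 3) \<in> A_p p"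
proof (rule A_I)
  assume x: "x \<in> A_p p"
  show "\<And>i. 0 \<le> (- x i) mod 3 \<and> (- x i) mod 3 < 3" by simp
  show "\<And>i. i > p \<Longrightarrow> (- x i) mod 3 = 0" using x by (simp add: A_out)
  have "(\<Sum>i\<le>p. (- x i) mod 3) mod 3 = (\<Sum>i\<le>p. - x i) mod 3" by (rule mod_sum_eq)
  also have "\<dots> = (- (\<Sum>i\<le>p. x i)) mod 3" by (simp add: sum_negf)
  also have "\<dots> = (- ((\<Sum>i\<le>p. x i) mod 3)) mod 3" by (simp add: mod_minus_eq)
  also have "\<dots> = 0" using A_sum[OF x] by simp
  finally show "(\<Sum>i\<le>p. (- x i) mod 3) mod 3 = 0" .
qed

lemma A_zero: "(\<lambda>i. 0) \<in> A_p p" by (rule A_I) simp_all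

lemma G_group: "group (G_p p)"
proof -
  interpret H: group "PSL2 p" by (rule PSL2_group)
  show ?thesis
  proof (rule groupI)
    fix u v assume u: "u \<in> carrier (G_p p)" and v: "v \<in> carrier (G_p p)"
    obtain x h where u': "u = (x,h)" by (cases u)
    obtain y k where v': "v = (y,k)" by (cases v)
    have x: "x \<in> A_p p" and h: "h \<in> carrier (PSL2 p)" using u u' by (auto simp: G_carrier)
    have y: "y \<in> A_p p" and k: "k \<in> carrier (PSL2 p)" using v v' by (auto simp: G_carrier)
    show "u \<otimes>\<^bsub>G_p p\<^esub> v \<in> carrier (G_p p)"
      unfolding u' v' G_mult G_carrier using A_add[OF x pa_A[OF h y]] h k by simp
  next
    show "\<one>\<^bsub>G_p p\<^esub> \<in> carrier (G_p p)" by (simp add: G_one G_carrier A_zero)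
  next
    fix u v w assume u: "u \<in> carrier (G_p p)" and v: "v \<in> carrier (G_p p)" and w: "w \<in> carrier (G_p p)"
    obtain x h where u': "u = (x,h)" by (cases u)
    obtain y k where v': "v = (y,k)" by (cases v)
    obtain z l where w': "w = (z,l)" by (cases w)
    have x: "x \<in> A_p p" and h: "h \<in> carrier (PSL2 p)" using u u' by (auto simp: G_carrier)
    have y: "y \<in> A_p p" and k: "k \<in> carrier (PSL2 p)" using v v' by (auto simp: G_carrier)
    have z: "z \<in> A_p p" and l: "l \<in> carrier (PSL2 p)" using w w' by (auto simp: G_carrier)
    have "(\<lambda>i. ((x i + perm_act p h y i) mod 3 + perm_act p (h \<otimes>\<^bsub>PSL2 p\<^esub> k) z i) mod 3)
        = (\<lambda>i. (x i + perm_act p h (\<lambda>j. (y j + perm_act p k z j) mod 3) i) mod 3)"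
    proof
      fix i
      show "((x i + perm_act p h y i) mod 3 + perm_act p (h \<otimes>\<^bsub>PSL2 p\<^esub> k) z i) mod 3
          = (x i + perm_act p h (\<lambda>j. (y j + perm_act p k z j) mod 3) i) mod 3"
        unfolding pa_mult[OF h k] by (simp add: pa_app mod_simps add.assoc)
    qed
    thus "u \<otimes>\<^bsub>G_p p\<^esub> v \<otimes>\<^bsub>G_p p\<^esub> w = u \<otimes>\<^bsub>G_p p\<^esub> (v \<otimes>\<^bsub>G_p p\<^esub> w)"
      unfolding u' v' w' G_mult using H.m_assoc[OF h k l] by simp
  next
    fix u assume u: "u \<in> carrier (G_p p)"
    obtain x h where u': "u = (x,h)" by (cases u)
    have x: "x \<in> A_p p" and h: "h \<in> carrier (PSL2 p)" using u u' by (auto simp: G_carrier)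
    have "perm_act p \<one>\<^bsub>PSL2 p\<^esub> x = x" using pa_one A_out[OF x] by blast
    thus "\<one>\<^bsub>G_p p\<^esub> \<otimes>\<^bsub>G_p p\<^esub> u = u" unfolding u' G_one G_mult using h A_mod[OF x] by simp
  next
    fix u assume u: "u \<in> carrier (G_p p)"
    obtain x h where u': "u = (x,h)" by (cases u)
    have x: "x \<in> A_p p" and h: "h \<in> carrier (PSL2 p)" using u u' by (auto simp: G_carrier)
    define y where "y = (\<lambda>i. (- perm_act p (inv\<^bsub>PSL2 p\<^esub> h) x i) mod 3)"
    have yA: "y \<in> A_p p" unfolding y_def by (rule A_neg[OF pa_A[OF H.inv_closed[OF h] x]])
    have "(y, inv\<^bsub>PSL2 p\<^esub> h) \<otimes>\<^bsub>G_p p\<^esub> u = \<one>\<^bsub>G_p p\<^esub>"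
      unfolding u' G_mult G_one using h by (simp add: y_def mod_simps)
    thus "\<exists>v\<in>carrier (G_p p). v \<otimes>\<^bsub>G_p p\<^esub> u = \<one>\<^bsub>G_p p\<^esub>"
      using yA H.inv_closed[OF h] by (auto simp: G_carrier)
  qed
qed

lemma G_inv:
  assumes "x \<in> A_p p" "h \<in> carrier (PSL2 p)"
  shows "inv\<^bsub>G_p p\<^esub> (x,h) = ((\<lambda>i. (- perm_act p (inv\<^bsub>PSL2 p\<^esub> h) x i) mod 3), inv\<^bsub>PSL2 p\<^esub> h)"
proof -
  interpret H: group "PSL2 p" by (rule PSL2_group)
  interpret G: group "G_p p" by (rule G_group)
  define y where "y = (\<lambda>i. (- perm_act p (inv\<^bsub>PSL2 p\<^esub> h) x i) mod 3)"
  have yA: "y \<in> A_p p" unfolding y_def by (rule A_neg[OF pa_A[OF H.inv_closed[OF assms(2)] assms(1)]])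
  have "(y, inv\<^bsub>PSL2 p\<^esub> h) \<otimes>\<^bsub>G_p p\<^esub> (x,h) = \<one>\<^bsub>G_p p\<^esub>"
    unfolding G_mult G_one using assms by (simp add: y_def mod_simps)
  thus ?thesis using G.inv_equality yA H.inv_closed[OF assms(2)] assms
    unfolding y_def by (simp add: G_carrier)
qed

end


context pp begin

lemma pa_zero: "perm_act p h (\<lambda>i. 0) = (\<lambda>i. 0)" by (simp add: pa_app fun_eq_iff)

lemma pa_inv_r: "h \<in> carrier (PSL2 p) \<Longrightarrow> x \<in> A_p p \<Longrightarrow> perm_act p h (perm_act p (inv\<^bsub>PSL2 p\<^esub> h) x) = x"
proof -
  interpret H: group "PSL2 p" by (rule PSL2_group)
  assume h: "h \<in> carrier (PSL2 p)" and x: "x \<in> A_p p"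
  have "perm_act p h (perm_act p (inv\<^bsub>PSL2 p\<^esub> h) x) = perm_act p (h \<otimes>\<^bsub>PSL2 p\<^esub> inv\<^bsub>PSL2 p\<^esub> h) x"
    using pa_mult[OF h H.inv_closed[OF h]] by simp
  also have "\<dots> = x" using H.r_inv[OF h] pa_one A_out[OF x] by simp
  finally show ?thesis .
qed

lemma G_conjA:
  assumes n: "n \<in> carrier (G_p p)" and a: "a \<in> A_p p"
  shows "n \<otimes>\<^bsub>G_p p\<^esub> (a, \<one>\<^bsub>PSL2 p\<^esub>) \<otimes>\<^bsub>G_p p\<^esub> inv\<^bsub>G_p p\<^esub> n = (perm_act p (snd n) a, \<one>\<^bsub>PSL2 p\<^esub>)"
proof -
  interpret H: group "PSL2 p" by (rule PSL2_group)
  obtain x h where n': "n = (x,h)" by (cases n)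
  have x: "x \<in> A_p p" and h: "h \<in> carrier (PSL2 p)" using n n' by (auto simp: G_carrier)
  define y where "y = (\<lambda>i. (- perm_act p (inv\<^bsub>PSL2 p\<^esub> h) x i) mod 3)"
  have e: "perm_act p h y i = (if i \<le> p then (- x i) mod 3 else 0)" for i
  proof (cases "i \<le> p")
    case True
    have "perm_act p h y i = (- perm_act p h (perm_act p (inv\<^bsub>PSL2 p\<^esub> h) x) i) mod 3"
      using True by (simp add: pa_app y_def)
    thus ?thesis using pa_inv_r[OF h x] True by simp
  qed (simp add: pa_app)
  have "(\<lambda>i. ((x i + perm_act p h a i) mod 3 + perm_act p h y i) mod 3) = perm_act p h a"
  proof
    fix i show "((x i + perm_act p h a i) mod 3 + perm_act p h y i) mod 3 = perm_act p h a i"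
    proof (cases "i \<le> p")
      case True
      have "((x i + perm_act p h a i) mod 3 + perm_act p h y i) mod 3 = perm_act p h a i mod 3"
        unfolding e using True by (simp add: mod_simps)
      thus ?thesis using A_mod[OF pa_A[OF h a]] by simp
    qed (simp add: pa_app A_out[OF x] e)
  qed
  thus ?thesis unfolding n' G_inv[OF x h] G_mult using h by (simp add: y_def[symmetric])
qed

lemma G_multA: "a \<in> A_p p \<Longrightarrow> b \<in> A_p p \<Longrightarrow>
   (a, \<one>\<^bsub>PSL2 p\<^esub>) \<otimes>\<^bsub>G_p p\<^esub> (b, \<one>\<^bsub>PSL2 p\<^esub>) = ((\<lambda>i. (a i + b i) mod 3), \<one>\<^bsub>PSL2 p\<^esub>)"
proof -
  interpret H: group "PSL2 p" by (rule PSL2_group)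
  assume a: "a \<in> A_p p" and b: "b \<in> A_p p"
  show ?thesis unfolding G_mult using pa_one[of b] A_out[OF b] by simp
qed

lemma G_mult0: "h \<in> carrier (PSL2 p) \<Longrightarrow> k \<in> carrier (PSL2 p) \<Longrightarrow>
   ((\<lambda>i. 0), h) \<otimes>\<^bsub>G_p p\<^esub> ((\<lambda>i. 0), k) = ((\<lambda>i. 0), h \<otimes>\<^bsub>PSL2 p\<^esub> k)"
  unfolding G_mult pa_zero by simp

lemma G_multA0: "a \<in> A_p p \<Longrightarrow> h \<in> carrier (PSL2 p) \<Longrightarrow>
   (a, \<one>\<^bsub>PSL2 p\<^esub>) \<otimes>\<^bsub>G_p p\<^esub> ((\<lambda>i. 0), h) = (a, h)"
proof -
  interpret H: group "PSL2 p" by (rule PSL2_group)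
  assume a: "a \<in> A_p p" and h: "h \<in> carrier (PSL2 p)"
  show ?thesis unfolding G_mult pa_zero using h A_mod[OF a] by simp
qed

lemma G_inv0: "h \<in> carrier (PSL2 p) \<Longrightarrow> inv\<^bsub>G_p p\<^esub> ((\<lambda>i. 0), h) = ((\<lambda>i. 0), inv\<^bsub>PSL2 p\<^esub> h)"
  using G_inv[OF A_zero] pa_zero by simp

lemma G_invA: "a \<in> A_p p \<Longrightarrow> inv\<^bsub>G_p p\<^esub> (a, \<one>\<^bsub>PSL2 p\<^esub>) = ((\<lambda>i. (- a i) mod 3), \<one>\<^bsub>PSL2 p\<^esub>)"
proof -
  interpret H: group "PSL2 p" by (rule PSL2_group)
  assume a: "a \<in> A_p p"
  show ?thesis using G_inv[OF a H.one_closed] pa_one[of a] A_out[OF a] by simp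
qed

end


context pp begin

definition tr :: "int \<Rightarrow> mat2 set" where "tr t = cls (mk 1 t 0 1)"

lemma trM_in: "mk 1 t 0 1 \<in> carrier (SL2 p)" by (simp add: mk_in)

lemma tr_in: "tr t \<in> carrier (PSL2 p)"
  unfolding tr_def PSL2_carrier using trM_in by blast

lemma tr_act: "x \<le> p \<Longrightarrow> psl_act p (tr t) x = (if x = p then p else nat ((int x + t) mod int p))"
proof -
  assume x: "x \<le> p"
  have d: "int p dvd (1*1 - 0*t - 1)" by simp
  show ?thesis
  proof (cases "x = p")
    case True
    have "mobius p (mk 1 t 0 1) x = p"
      by (rule mob_eq[OF d x order.refl P_not_unit]) (use True in \<open>simp_all add: pu_def pw_def\<close>)
    thus ?thesis unfolding tr_def psl_act_cls[OF trM_in x] using True by simp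
  next
    case False
    define y where "y = nat ((int x + t) mod int p)"
    have yr: "int y = (int x + t) mod int p" using P_ge7 by (simp add: y_def)
    have yp: "y < p" using P_ge7 yr by (smt (verit) of_nat_less_iff pos_mod_bound)
    have "mobius p (mk 1 t 0 1) x = y"
    proof (rule mob_eq[OF d x _ P_not_unit])
      show "y \<le> p" using yp by simp
      show "int p dvd (1 * pu x + t * pw x - 1 * pu y)"
        using False yp yr modP_dvd[of "int x + t"] by (simp add: pu_def pw_def dvd_diff_commute)
      show "int p dvd (0 * pu x + 1 * pw x - 1 * pw y)" using False yp by (simp add: pw_def)
    qed
    thus ?thesis unfolding tr_def psl_act_cls[OF trM_in x] using False y_def by simp
  qed
qed

lemma tr_inv: "inv\<^bsub>PSL2 p\<^esub> (tr t) = tr (-t)"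
proof -
  have d: "int p dvd (1*1 - 0*t - 1)" by simp
  show ?thesis unfolding tr_def PSL2_inv[OF trM_in] SL2_inv[OF d] by simp
qed

lemma trans_ex: "j \<le> p \<Longrightarrow> \<exists>g\<in>carrier (PSL2 p). psl_act p g p = j"
proof -
  interpret H: group "PSL2 p" by (rule PSL2_group)
  assume j: "j \<le> p"
  show ?thesis
  proof (cases "j = p")
    case True thus ?thesis using psl_one[of p] H.one_closed by auto
  next
    case False
    have d: "int p dvd (int j * 0 - 1 * (-1) - 1)" by simp
    have M: "mk (int j) (-1) 1 0 \<in> carrier (SL2 p)" using d mk_in by blast
    have "mobius p (mk (int j) (-1) 1 0) p = j"
      by (rule mob_eq[OF d _ j P_not_unit]) (use False in \<open>simp_all add: pu_def pw_def\<close>)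
    moreover have "cls (mk (int j) (-1) 1 0) \<in> carrier (PSL2 p)" using M PSL2_carrier by blast
    ultimately show ?thesis using psl_act_cls[OF M, of p] by auto
  qed
qed

lemma faithful:
  assumes h: "h \<in> carrier (PSL2 p)" and fx: "\<forall>x\<le>p. psl_act p h x = x"
  shows "h = \<one>\<^bsub>PSL2 p\<^esub>"
proof -
  obtain X where X: "X \<in> carrier (SL2 p)" "h = cls X" using h PSL2_elim by blast
  obtain a b c d where Xe: "X = mk a b c d" and det: "int p dvd (a*d - c*b - 1)" using X(1) SL2_elim by blast
  have m: "mobius p (mk a b c d) x = x" if "x \<le> p" for x
    using fx that psl_act_cls[OF X(1) that] X(2) Xe by simp
  have p0: "0 \<le> p" "1 \<le> p" "0 \<noteq> p" "1 \<noteq> p" using p_ge7 by auto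
  obtain l1 where l1: "int p dvd (a * pu p + b * pw p - l1 * pu p)" "int p dvd (c * pu p + d * pw p - l1 * pw p)"
    using mob_char[OF det order.refl] m[OF order.refl] by auto
  obtain l2 where l2: "int p dvd (a * pu 0 + b * pw 0 - l2 * pu 0)"
    using mob_char[OF det p0(1)] m[OF p0(1)] by auto
  obtain l3 where l3: "int p dvd (a * pu 1 + b * pw 1 - l3 * pu 1)" "int p dvd (c * pu 1 + d * pw 1 - l3 * pw 1)"
    using mob_char[OF det p0(2)] m[OF p0(2)] by auto
  have c: "int p dvd c" using l1(2) by (simp add: pu_def pw_def)
  have b: "int p dvd b" using l2 p0 by (simp add: pu_def pw_def)
  have e3: "int p dvd (a + b - l3)" "int p dvd (c + d - l3)" using l3 p0 by (simp_all add: pu_def pw_def)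
  have ad: "int p dvd (a - d)" using e3 b c by algebra
  have "int p dvd ((a - 1) * (a + 1))" using ad det b c by algebra
  hence "int p dvd (a - 1) \<or> int p dvd (a + 1)" using pdvd_mult by blast
  hence "X = scal 1 \<or> X = scal (-1)"
  proof
    assume "int p dvd (a - 1)"
    hence "mk a b c d = mk 1 0 0 1" using ad b c unfolding mk_eq by (simp; algebra)
    thus ?thesis using Xe by (simp add: scal_def)
  next
    assume "int p dvd (a + 1)"
    hence "mk a b c d = mk (-1) 0 0 (-1)" using ad b c unfolding mk_eq by (simp; algebra)
    thus ?thesis using Xe by (simp add: scal_def)
  qed
  hence "X \<in> centre_pm p" by (simp add: centre_eq)
  hence "h = centre_pm p" using cls_one_iff[OF X(1)] X(2) by simp
  thus ?thesis by (simp add: PSL2_def)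
qed

end


context pp begin

lemma shift_bij:
  assumes i: "i < p"
  shows "bij_betw (\<lambda>t. nat ((int i - int t) mod int p)) {..<p} {..<p}"
proof -
  let ?f = "\<lambda>t. nat ((int i - int t) mod int p)"
  have img: "?f ` {..<p} \<subseteq> {..<p}"
  proof
    fix y assume "y \<in> ?f ` {..<p}"
    then obtain t where "y = ?f t" by blast
    moreover have "(int i - int t) mod int p < int p" using P_ge7 by simp
    ultimately show "y \<in> {..<p}" using P_ge7 by (simp add: nat_less_iff)
  qed
  have inj: "inj_on ?f {..<p}"
  proof (rule inj_onI)
    fix t1 t2 assume t: "t1 \<in> {..<p}" "t2 \<in> {..<p}" and e: "?f t1 = ?f t2"
    have "(int i - int t1) mod int p = (int i - int t2) mod int p"
      using e P_ge7 by (metis eq_nat_nat_iff pos_mod_sign of_nat_0_less_iff order.strict_trans2 zero_less_numeral)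
    hence "int p dvd (int t2 - int t1)" by (simp add: mod_eq_dvd_iff)
    hence "int t2 = int t1" using range_eq[of "int t2" "int t1"] t by simp
    thus "t1 = t2" by simp
  qed
  have "?f ` {..<p} = {..<p}" by (rule endo_inj_surj[OF _ img inj]) simp
  thus ?thesis using inj by (simp add: bij_betw_def)
qed

lemma sum_split_p: "(\<Sum>i\<le>p. (f::nat\<Rightarrow>int) i) = (\<Sum>i<p. f i) + f p"
  by (simp add: lessThan_Suc_atMost[symmetric])

lemma irred:
  fixes S :: "(nat \<Rightarrow> int) set"
  assumes SA: "S \<subseteq> A_p p" and S0: "(\<lambda>i. 0) \<in> S"
    and Sadd: "\<And>a b. a \<in> S \<Longrightarrow> b \<in> S \<Longrightarrow> (\<lambda>i. (a i + b i) mod 3) \<in> S"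
    and Sact: "\<And>h a. h \<in> carrier (PSL2 p) \<Longrightarrow> a \<in> S \<Longrightarrow> perm_act p h a \<in> S"
    and a0: "a0 \<in> S" "a0 \<noteq> (\<lambda>i. 0)"
  shows "A_p p \<subseteq> S"
proof -
  interpret H: group "PSL2 p" by (rule PSL2_group)
  have Smul: "(\<lambda>i. (int c * v i) mod 3) \<in> S" if v: "v \<in> S" for v c
  proof (induction c)
    case 0 show ?case using S0 by simp
  next
    case (Suc c)
    have "(\<lambda>i. ((int c * v i) mod 3 + v i) mod 3) \<in> S" using Sadd[OF Suc v] .
    moreover have "(\<lambda>i. ((int c * v i) mod 3 + v i) mod 3) = (\<lambda>i. (int (Suc c) * v i) mod 3)"
      by (auto simp: fun_eq_iff mod_simps algebra_simps)
    ultimately show ?case by simp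
  qed
  obtain i0 where i0: "a0 i0 \<noteq> 0" using a0(2) by auto
  have j: "i0 \<le> p" using A_out[of a0 i0] SA a0(1) i0 by (meson not_le subsetD)
  obtain g where g: "g \<in> carrier (PSL2 p)" "psl_act p g p = i0" using trans_ex[OF j] by blast
  define b where "b = perm_act p (inv\<^bsub>PSL2 p\<^esub> g) a0"
  have bS: "b \<in> S" unfolding b_def by (rule Sact[OF H.inv_closed[OF g(1)] a0(1)])
  have bA: "b \<in> A_p p" using bS SA by blast
  have bp: "b p = a0 i0" by (simp add: b_def pa_app H.inv_inv[OF g(1)] g(2))
  define \<beta> where "\<beta> = b p"
  have \<beta>: "\<beta> = 1 \<or> \<beta> = 2" using A_vals[OF bA, of p] bp i0 unfolding \<beta>_def by auto
  define c where "c n = (\<lambda>i. (\<Sum>t<n. perm_act p (tr (int t)) b i) mod 3)" for n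
  have cS: "c n \<in> S" for n
  proof (induction n)
    case 0 show ?case using S0 by (simp add: c_def)
  next
    case (Suc n)
    have "(\<lambda>i. (c n i + perm_act p (tr (int n)) b i) mod 3) \<in> S" using Sadd[OF Suc Sact[OF tr_in bS]] .
    moreover have "(\<lambda>i. (c n i + perm_act p (tr (int n)) b i) mod 3) = c (Suc n)"
      by (simp add: c_def fun_eq_iff mod_simps)
    ultimately show ?case by simp
  qed
  have pat: "perm_act p (tr (int t)) b i = b (if i = p then p else nat ((int i - int t) mod int p))" if "i \<le> p" for t i
    using that by (simp add: pa_app tr_inv tr_act)
  define s where "s = (\<Sum>k<p. b k) mod 3"
  have sb: "(s + \<beta>) mod 3 = 0"
  proof -
    have "(\<Sum>k\<le>p. b k) mod 3 = 0" by (rule A_sum[OF bA])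
    thus ?thesis unfolding s_def \<beta>_def sum_split_p by (simp add: mod_simps)
  qed
  have s3: "0 \<le> s" "s < 3" by (simp_all add: s_def)
  have s012: "s = 0 \<or> s = 1 \<or> s = 2" using s3 by auto
  have cp: "c p = (\<lambda>i. if i < p then s else if i = p then \<beta> else 0)"
  proof
    fix i
    show "c p i = (if i < p then s else if i = p then \<beta> else 0)"
    proof (cases "i < p")
      case True
      have "(\<Sum>t<p. perm_act p (tr (int t)) b i) = (\<Sum>t<p. b (nat ((int i - int t) mod int p)))"
        using True pat by simp
      also have "\<dots> = (\<Sum>k<p. b k)" by (rule sum.reindex_bij_betw[OF shift_bij[OF True]])
      finally show ?thesis using True by (simp add: c_def s_def)
    next
      case False
      show ?thesis
      proof (cases "i = p")
        case True
        have "(\<Sum>t<p. perm_act p (tr (int t)) b i) = (\<Sum>t<p. \<beta>)" using True pat \<beta>_def by simp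
        also have "\<dots> = int p * \<beta>" by simp
        finally have "c p i = (int p * \<beta>) mod 3" by (simp add: c_def)
        also have "\<dots> = ((int p mod 3) * \<beta>) mod 3" by (simp add: mod_simps)
        also have "\<dots> = \<beta>"
        proof -
          have "int (p mod 3) = int p mod int 3" by (rule zmod_int)
          hence "int p mod 3 = 1" using p3 by simp
          thus ?thesis using \<beta> by auto
        qed
        finally show ?thesis using True by simp
      next
        case F2: False
        hence "i > p" using False by simp
        thus ?thesis using False F2 by (simp add: c_def pa_app)
      qed
    qed
  qed
  define f where "f = (\<lambda>i. if i < p then 2 else if i = p then 1 else (0::int))"
  have fS: "f \<in> S"
  proof (cases "\<beta> = 1")
    case True
    hence "s = 2" using sb s012 by auto
    hence "c p = f" using True cp f_def by auto
    thus ?thesis using cS by metis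
  next
    case False
    hence b2: "\<beta> = 2" using \<beta> by simp
    hence "s = 1" using sb s012 by auto
    hence "(\<lambda>i. (c p i + c p i) mod 3) = f" using b2 cp f_def by auto
    thus ?thesis using Sadd[OF cS cS] by metis
  qed
  define F where "F j = (\<lambda>i. if i = j then 1 else if i \<le> p then 2 else (0::int))" for j
  have FS: "F j \<in> S" if jp: "j \<le> p" for j
  proof -
    obtain gj where gj: "gj \<in> carrier (PSL2 p)" "psl_act p gj p = j" using trans_ex[OF jp] by blast
    have "perm_act p gj f = F j"
    proof
      fix i show "perm_act p gj f i = F j i"
      proof (cases "i \<le> p")
        case True
        have r: "psl_act p (inv\<^bsub>PSL2 p\<^esub> gj) i \<le> p" using psl_range[OF H.inv_closed[OF gj(1)] True] .
        show ?thesis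
        proof (cases "i = j")
          case True
          hence "psl_act p (inv\<^bsub>PSL2 p\<^esub> gj) i = p" using psl_inv_l[OF gj(1) order.refl] gj(2) by simp
          thus ?thesis using True jp by (simp add: pa_app F_def f_def)
        next
          case False
          have "psl_act p (inv\<^bsub>PSL2 p\<^esub> gj) i \<noteq> p"
          proof
            assume "psl_act p (inv\<^bsub>PSL2 p\<^esub> gj) i = p"
            hence "i = psl_act p gj p" using psl_inv_r[OF gj(1) \<open>i \<le> p\<close>] by simp
            thus False using False gj(2) by simp
          qed
          hence "psl_act p (inv\<^bsub>PSL2 p\<^esub> gj) i < p" using r by simp
          thus ?thesis using False \<open>i \<le> p\<close> by (simp add: pa_app F_def f_def)
        qed
      qed (use jp in \<open>auto simp add: pa_app F_def\<close>)
    qed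
    thus ?thesis using Sact[OF gj(1) fS] by metis
  qed
  define V where "V j = (\<lambda>i. if i = j then 1 else if i = p then 2 else (0::int))" for j
  have VS: "V j \<in> S" if jp: "j < p" for j
  proof -
    have Fj: "F j \<in> S" using FS jp by simp
    have "(\<lambda>i. (F p i + (int 2 * F j i) mod 3) mod 3) \<in> S"
      by (rule Sadd[OF FS[OF order.refl] Smul[OF Fj]])
    moreover have "(\<lambda>i. (F p i + (int 2 * F j i) mod 3) mod 3) = V j"
      using jp by (auto simp: fun_eq_iff F_def V_def)
    ultimately show ?thesis by simp
  qed
  have main: "\<forall>a\<in>A_p p. (\<forall>i. k \<le> i \<and> i < p \<longrightarrow> a i = 0) \<longrightarrow> a \<in> S" for k
  proof (induction k)
    case 0
    show ?case
    proof (intro ballI impI)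
      fix a assume a: "a \<in> A_p p" and z: "\<forall>i. 0 \<le> i \<and> i < p \<longrightarrow> a i = 0"
      have "(\<Sum>i<p. a i) = 0" using z by simp
      hence "a p mod 3 = 0" using A_sum[OF a] sum_split_p[of a] by simp
      hence "a p = 0" using A_mod[OF a] by simp
      hence "a = (\<lambda>i. 0)" using z A_out[OF a] by (metis linorder_neqE_nat zero_le)
      thus "a \<in> S" using S0 by simp
    qed
  next
    case (Suc k)
    show ?case
    proof (intro ballI impI)
      fix a assume a: "a \<in> A_p p" and z: "\<forall>i. Suc k \<le> i \<and> i < p \<longrightarrow> a i = 0"
      show "a \<in> S"
      proof (cases "k < p")
        case False
        thus ?thesis using Suc a by auto
      next
        case True
        have ak: "0 \<le> a k" "a k < 3" using A_vals[OF a] by auto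
        define W where "W = (\<lambda>i. (int (nat (a k)) * V k i) mod 3)"
        define W' where "W' = (\<lambda>i. (int (nat (2 * a k)) * V k i) mod 3)"
        have WS: "W \<in> S" unfolding W_def by (rule Smul[OF VS[OF True]])
        have W'S: "W' \<in> S" unfolding W'_def by (rule Smul[OF VS[OF True]])
        have W'A: "W' \<in> A_p p" using W'S SA by blast
        define a' where "a' = (\<lambda>i. (a i + W' i) mod 3)"
        have a'A: "a' \<in> A_p p" unfolding a'_def by (rule A_add[OF a W'A])
        have a'z: "\<forall>i. k \<le> i \<and> i < p \<longrightarrow> a' i = 0"
        proof (intro allI impI)
          fix i assume i: "k \<le> i \<and> i < p"
          show "a' i = 0"
          proof (cases "i = k")
            case True
            thus ?thesis using ak by (simp add: a'_def W'_def V_def mod_simps)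
          next
            case False
            hence "a i = 0" using z i by auto
            thus ?thesis using False i by (simp add: a'_def W'_def V_def)
          qed
        qed
        have a'S: "a' \<in> S" using Suc a'A a'z by blast
        have "(\<lambda>i. (a' i + W i) mod 3) = a"
        proof
          fix i
          have n: "int (nat (a k)) = a k" "int (nat (2 * a k)) = 2 * a k" using ak by simp_all
          have "(a' i + W i) mod 3 = ((a i + (2 * a k) * V k i) mod 3 + (a k * V k i) mod 3) mod 3"
            unfolding a'_def W_def W'_def n by (simp add: mod_add_right_eq)
          also have "\<dots> = ((a i + (2 * a k) * V k i) + a k * V k i) mod 3" by (rule mod_add_eq)
          also have "\<dots> = (a i + 3 * (a k * V k i)) mod 3" by (simp add: algebra_simps)
          also have "\<dots> = a i" using A_mod[OF a] by simp
          finally show "(a' i + W i) mod 3 = a i" .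
        qed
        thus ?thesis using Sadd[OF a'S WS] by simp
      qed
    qed
  qed
  show ?thesis using main[of p] by auto
qed

end


context pp begin

lemma SL2_simple:
  fixes Q :: "mat2 set"
  assumes QS: "Q \<subseteq> carrier (SL2 p)"
    and Qmul: "\<And>X Y. X \<in> Q \<Longrightarrow> Y \<in> Q \<Longrightarrow> mat_mult p X Y \<in> Q"
    and Qinv: "\<And>X. X \<in> Q \<Longrightarrow> inv\<^bsub>SL2 p\<^esub> X \<in> Q"
    and Qconj: "\<And>X Y. X \<in> Q \<Longrightarrow> Y \<in> carrier (SL2 p) \<Longrightarrow> mat_mult p (mat_mult p Y X) (inv\<^bsub>SL2 p\<^esub> Y) \<in> Q"
    and X0: "X0 \<in> Q" "X0 \<notin> centre_pm p"
  shows "carrier (SL2 p) \<subseteq> Q"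
proof -
  have conj_mk: "mat_mult p (mat_mult p (mk e f g h) X) (mk h (-f) (-g) e) \<in> Q"
    if "X \<in> Q" "int p dvd (e*h - g*f - 1)" for X e f g h
    using Qconj[OF that(1)] SL2_inv[OF that(2)] mk_in that(2) by metis
  have inv_mk: "mk d (-b) (-c) a \<in> Q" if "mk a b c d \<in> Q" "int p dvd (a*d - c*b - 1)" for a b c d
    using Qinv[OF that(1)] SL2_inv[OF that(2)] by metis
  have stepU: "\<exists>z. \<not> int p dvd z \<and> mk 1 z 0 1 \<in> Q"
    if Y: "mk \<alpha> \<beta> \<gamma> \<delta> \<in> Q" and g: "int p dvd \<gamma>" and d: "int p dvd (\<alpha>*\<delta> - \<gamma>*\<beta> - 1)"
      and n: "\<not> int p dvd (\<alpha>*\<alpha> - 1)" for \<alpha> \<beta> \<gamma> \<delta>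
  proof -
    have d1: "int p dvd (1*1 - 0*1 - 1)" by simp
    have A: "mat_mult p (mat_mult p (mk 1 1 0 1) (mk \<alpha> \<beta> \<gamma> \<delta>)) (mk 1 (-1) (-0) 1) \<in> Q"
      by (rule conj_mk[OF Y d1])
    have B: "mk \<delta> (-\<beta>) (-\<gamma>) \<alpha> \<in> Q" by (rule inv_mk[OF Y d])
    have "mat_mult p (mat_mult p (mat_mult p (mk 1 1 0 1) (mk \<alpha> \<beta> \<gamma> \<delta>)) (mk 1 (-1) (-0) 1)) (mk \<delta> (-\<beta>) (-\<gamma>) \<alpha>)
        = mk 1 (1 - \<alpha>*\<alpha>) 0 1"
      unfolding mk_mult mk_eq
      by (insert g d, intro conjI; ((simp add: algebra_simps; fail) | algebra))
    hence "mk 1 (1 - \<alpha>*\<alpha>) 0 1 \<in> Q" using Qmul[OF A B] by simp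
    moreover have "\<not> int p dvd (1 - \<alpha>*\<alpha>)" using n by (simp add: dvd_diff_commute)
    ultimately show ?thesis by blast
  qed
  have T_all: "mk 1 t 0 1 \<in> Q" if z: "\<not> int p dvd z" "mk 1 z 0 1 \<in> Q" for z t
  proof -
    have pw: "mk 1 (int (Suc n) * z) 0 1 \<in> Q" for n
    proof (induction n)
      case 0 show ?case using z by simp
    next
      case (Suc n)
      have "mat_mult p (mk 1 (int (Suc n) * z) 0 1) (mk 1 z 0 1) = mk 1 (int (Suc (Suc n)) * z) 0 1"
        unfolding mk_mult by (simp add: algebra_simps)
      thus ?case using Qmul[OF Suc z(2)] by simp
    qed
    obtain zi where zi: "int p dvd (z*zi - 1)" using inv_ex z(1) by blast
    define n where "n = nat ((t*zi) mod int p) + p - 1"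
    have "int (Suc n) = (t*zi) mod int p + int p" using P_ge7 by (simp add: n_def)
    hence "mk 1 (int (Suc n) * z) 0 1 = mk 1 t 0 1"
      unfolding mk_eq using zi modP_dvd[of "t*zi"] by (simp; algebra)
    thus ?thesis using pw[of n] by simp
  qed
  have L_all: "mk 1 0 t 1 \<in> Q" if T: "\<And>t. mk 1 t 0 1 \<in> Q" for t
  proof -
    have dw: "int p dvd (0*0 - 1*(-1) - 1)" by simp
    have "mat_mult p (mat_mult p (mk 0 (-1) 1 0) (mk 1 (-t) 0 1)) (mk 0 (-(-1)) (-1) 0) \<in> Q"
      by (rule conj_mk[OF T dw])
    moreover have "mat_mult p (mat_mult p (mk 0 (-1) 1 0) (mk 1 (-t) 0 1)) (mk 0 (-(-1)) (-1) 0) = mk 1 0 t 1"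
      unfolding mk_mult by simp
    ultimately show ?thesis by simp
  qed
  have gen: "carrier (SL2 p) \<subseteq> Q" if T: "\<And>t. mk 1 t 0 1 \<in> Q" for dummy :: bool
  proof -
    have L: "\<And>t. mk 1 0 t 1 \<in> Q" using L_all T by blast
    have caseA: "mk a b c d \<in> Q" if d: "int p dvd (a*d - c*b - 1)" and c: "\<not> int p dvd c" for a b c d
    proof -
      obtain ci where ci: "int p dvd (c*ci - 1)" using inv_ex c by blast
      have "mat_mult p (mat_mult p (mk 1 ((a-1)*ci) 0 1) (mk 1 0 c 1)) (mk 1 ((d-1)*ci) 0 1) = mk a b c d"
        unfolding mk_mult mk_eq
        by (insert ci d, intro conjI; ((simp add: algebra_simps; fail) | algebra))
      thus ?thesis using Qmul[OF Qmul[OF T L] T] by metis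
    qed
    show ?thesis
    proof
      fix X assume X: "X \<in> carrier (SL2 p)"
      obtain a b c d where Xe: "X = mk a b c d" and d: "int p dvd (a*d - c*b - 1)" using X SL2_elim by blast
      show "X \<in> Q"
      proof (cases "int p dvd c")
        case False thus ?thesis using caseA[OF d] Xe by simp
      next
        case True
        have nd: "\<not> int p dvd (c + d)"
        proof
          assume "int p dvd (c + d)"
          hence "int p dvd 1" using d True by algebra
          thus False using P_not_unit by simp
        qed
        have d2: "int p dvd ((a+b)*d - (c+d)*b - 1)" using d by algebra
        have Z: "mk (a+b) b (c+d) d \<in> Q" by (rule caseA[OF d2 nd])
        have "mat_mult p (mk (a+b) b (c+d) d) (mk 1 0 (-1) 1) = mk a b c d"
          unfolding mk_mult by (simp add: algebra_simps)
        thus ?thesis using Qmul[OF Z L] Xe by metis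
      qed
    qed
  qed
  have caseC0: "\<exists>\<alpha> \<beta> \<gamma> \<delta>. mk \<alpha> \<beta> \<gamma> \<delta> \<in> Q \<and> int p dvd \<gamma> \<and> int p dvd (\<alpha>*\<delta> - \<gamma>*\<beta> - 1) \<and> \<not> int p dvd (\<alpha>*\<alpha> - 1)"
    if M: "mk a b c d \<in> Q" and d: "int p dvd (a*d - c*b - 1)" and dd: "int p dvd d" for a b c d
  proof -
    obtain hi where hi: "int p dvd (2*hi - 1)" using inv_ex ndvd_consts(2) by blast
    have dD: "int p dvd (2*hi - 0*0 - 1)" using hi by simp
    have Mi: "mk d (-b) (-c) a \<in> Q" by (rule inv_mk[OF M d])
    have C: "mat_mult p (mat_mult p (mk 2 0 0 hi) (mk d (-b) (-c) a)) (mk hi (-0) (-0) 2) \<in> Q"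
      by (rule conj_mk[OF Mi dD])
    define Y where "Y = mat_mult p (mk a b c d) (mat_mult p (mat_mult p (mk 2 0 0 hi) (mk d (-b) (-c) a)) (mk hi (-0) (-0) 2))"
    have YQ: "Y \<in> Q" unfolding Y_def by (rule Qmul[OF M C])
    define \<alpha> where "\<alpha> = 2*a*d*hi - b*c*hi*hi"
    define \<beta> where "\<beta> = -4*a*b + 2*a*b*hi"
    define \<gamma> where "\<gamma> = 2*c*d*hi - c*d*hi*hi"
    define \<delta> where "\<delta> = -4*c*b + 2*d*a*hi"
    have Ye: "Y = mk \<alpha> \<beta> \<gamma> \<delta>" unfolding Y_def mk_mult \<alpha>_def \<beta>_def \<gamma>_def \<delta>_def
      by (simp add: algebra_simps)
    have "\<gamma> = d * (2*c*hi - c*hi*hi)" unfolding \<gamma>_def by (simp add: algebra_simps)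
    hence g: "int p dvd \<gamma>" using dd by simp
    have dY: "int p dvd (\<alpha>*\<delta> - \<gamma>*\<beta> - 1)" unfolding \<alpha>_def \<beta>_def \<gamma>_def \<delta>_def using d hi by algebra
    have n: "\<not> int p dvd (\<alpha>*\<alpha> - 1)"
    proof
      assume "int p dvd (\<alpha>*\<alpha> - 1)"
      hence "int p dvd 15" unfolding \<alpha>_def using d hi dd by algebra
      thus False using ndvd_15 by simp
    qed
    show ?thesis using YQ Ye g dY n by blast
  qed
  have caseC: "\<exists>\<alpha> \<beta> \<gamma> \<delta>. mk \<alpha> \<beta> \<gamma> \<delta> \<in> Q \<and> int p dvd \<gamma> \<and> int p dvd (\<alpha>*\<delta> - \<gamma>*\<beta> - 1) \<and> \<not> int p dvd (\<alpha>*\<alpha> - 1)"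
    if M: "mk a b c d \<in> Q" and d: "int p dvd (a*d - c*b - 1)" and c: "\<not> int p dvd c" for a b c d
  proof -
    obtain ci where ci: "int p dvd (c*ci - 1)" using inv_ex c by blast
    have d1: "int p dvd (1*1 - 0*(d*ci) - 1)" by simp
    have "mat_mult p (mat_mult p (mk 1 (d*ci) 0 1) (mk a b c d)) (mk 1 (-(d*ci)) (-0) 1) \<in> Q"
      by (rule conj_mk[OF M d1])
    moreover have "mat_mult p (mat_mult p (mk 1 (d*ci) 0 1) (mk a b c d)) (mk 1 (-(d*ci)) (-0) 1) =
       mk (a + d*ci*c) (-(d*ci)*(a + d*ci*c) + b + d*ci*d) c (d - c*d*ci)"
      unfolding mk_mult by (simp add: algebra_simps)
    ultimately have M': "mk (a + d*ci*c) (-(d*ci)*(a + d*ci*c) + b + d*ci*d) c (d - c*d*ci) \<in> Q" by simp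
    have d': "int p dvd ((a + d*ci*c) * (d - c*d*ci) - c*(-(d*ci)*(a + d*ci*c) + b + d*ci*d) - 1)"
      using d by algebra
    have dd: "int p dvd (d - c*d*ci)" using ci by algebra
    show ?thesis by (rule caseC0[OF M' d' dd])
  qed
  obtain a b c d where Xe: "X0 = mk a b c d" and d: "int p dvd (a*d - c*b - 1)" using X0(1) QS SL2_elim by blast
  have "\<exists>z. \<not> int p dvd z \<and> mk 1 z 0 1 \<in> Q"
  proof (cases "int p dvd c")
    case False
    then obtain \<alpha> \<beta> \<gamma> \<delta> where "mk \<alpha> \<beta> \<gamma> \<delta> \<in> Q" "int p dvd \<gamma>" "int p dvd (\<alpha>*\<delta> - \<gamma>*\<beta> - 1)" "\<not> int p dvd (\<alpha>*\<alpha> - 1)"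
      using caseC[OF _ d] X0(1) Xe by blast
    thus ?thesis using stepU by blast
  next
    case cT: True
    show ?thesis
    proof (cases "int p dvd b")
      case False
      have dw: "int p dvd (0*0 - 1*(-1) - 1)" by simp
      have W: "mat_mult p (mat_mult p (mk 0 (-1) 1 0) (mk a b c d)) (mk 0 (-(-1)) (-1) 0) \<in> Q"
        using conj_mk[OF X0(1)[unfolded Xe] dw] .
      have "mat_mult p (mat_mult p (mk 0 (-1) 1 0) (mk a b c d)) (mk 0 (-(-1)) (-1) 0) = mk d (-c) (-b) a"
        unfolding mk_mult by simp
      hence W': "mk d (-c) (-b) a \<in> Q" using W by simp
      have dW: "int p dvd (d*a - (-b)*(-c) - 1)" using d by algebra
      have nb: "\<not> int p dvd (-b)" using False by simp
      obtain \<alpha> \<beta> \<gamma> \<delta> where "mk \<alpha> \<beta> \<gamma> \<delta> \<in> Q" "int p dvd \<gamma>" "int p dvd (\<alpha>*\<delta> - \<gamma>*\<beta> - 1)" "\<not> int p dvd (\<alpha>*\<alpha> - 1)"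
        using caseC[OF W' dW nb] by blast
      thus ?thesis using stepU by blast
    next
      case bT: True
      have "\<not> int p dvd (a*a - 1)"
      proof
        assume aa: "int p dvd (a*a - 1)"
        have da: "int p dvd (d - a)" using aa d bT cT by algebra
        have "int p dvd ((a - 1) * (a + 1))" using aa by algebra
        hence "int p dvd (a - 1) \<or> int p dvd (a + 1)" using pdvd_mult by blast
        hence "X0 \<in> centre_pm p"
        proof
          assume "int p dvd (a - 1)"
          hence "mk a b c d = mk 1 0 0 1" using da bT cT unfolding mk_eq by (simp; algebra)
          thus ?thesis using Xe by (simp add: centre_eq scal_def)
        next
          assume "int p dvd (a + 1)"
          hence "mk a b c d = mk (-1) 0 0 (-1)" using da bT cT unfolding mk_eq by (simp; algebra)
          thus ?thesis using Xe by (simp add: centre_eq scal_def)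
        qed
        thus False using X0(2) by simp
      qed
      thus ?thesis using stepU[OF X0(1)[unfolded Xe] cT d] by blast
    qed
  qed
  then obtain z where z: "\<not> int p dvd z" "mk 1 z 0 1 \<in> Q" by blast
  show ?thesis using gen[OF T_all[OF z]] by blast
qed

end


context pp begin

lemma normal_class:
  assumes MN: "M \<lhd> G_p p"
  shows "M = {\<one>\<^bsub>G_p p\<^esub>} \<or> M = A_sub p \<or> M = carrier (G_p p)"
proof -
  interpret G: group "G_p p" by (rule G_group)
  interpret H: group "PSL2 p" by (rule PSL2_group)
  interpret SL: group "SL2 p" by (rule SL2_group)
  interpret N: normal M "G_p p" by (rule MN)
  have conj: "g \<otimes>\<^bsub>G_p p\<^esub> m \<otimes>\<^bsub>G_p p\<^esub> inv\<^bsub>G_p p\<^esub> g \<in> M" if "g \<in> carrier (G_p p)" "m \<in> M" for g m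
    using MN G.normal_inv_iff that by blast
  have MG: "M \<subseteq> carrier (G_p p)" by (rule N.subset)
  define S where "S = {a \<in> A_p p. (a, \<one>\<^bsub>PSL2 p\<^esub>) \<in> M}"
  show ?thesis
  proof (cases "\<exists>a0\<in>S. a0 \<noteq> (\<lambda>i. 0)")
    case True
    then obtain a0 where a0: "a0 \<in> S" "a0 \<noteq> (\<lambda>i. 0)" by blast
    have AS: "A_p p \<subseteq> S"
    proof (rule irred[OF _ _ _ _ a0])
      show "S \<subseteq> A_p p" by (auto simp: S_def)
      show "(\<lambda>i. 0) \<in> S" using N.one_closed A_zero by (simp add: S_def G_one)
    next
      fix a b assume "a \<in> S" "b \<in> S"
      hence a: "a \<in> A_p p" "(a, \<one>\<^bsub>PSL2 p\<^esub>) \<in> M" and b: "b \<in> A_p p" "(b, \<one>\<^bsub>PSL2 p\<^esub>) \<in> M"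
        by (auto simp: S_def)
      have "(a, \<one>\<^bsub>PSL2 p\<^esub>) \<otimes>\<^bsub>G_p p\<^esub> (b, \<one>\<^bsub>PSL2 p\<^esub>) \<in> M" using N.m_closed a(2) b(2) by blast
      thus "(\<lambda>i. (a i + b i) mod 3) \<in> S" using G_multA[OF a(1) b(1)] A_add[OF a(1) b(1)] by (simp add: S_def)
    next
      fix h a assume h: "h \<in> carrier (PSL2 p)" and "a \<in> S"
      hence a: "a \<in> A_p p" "(a, \<one>\<^bsub>PSL2 p\<^esub>) \<in> M" by (auto simp: S_def)
      have g: "((\<lambda>i. 0), h) \<in> carrier (G_p p)" using h A_zero by (simp add: G_carrier)
      have "((\<lambda>i. 0), h) \<otimes>\<^bsub>G_p p\<^esub> (a, \<one>\<^bsub>PSL2 p\<^esub>) \<otimes>\<^bsub>G_p p\<^esub> inv\<^bsub>G_p p\<^esub> ((\<lambda>i. 0), h) \<in> M"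
        by (rule conj[OF g a(2)])
      thus "perm_act p h a \<in> S" using G_conjA[OF g a(1)] pa_A[OF h a(1)] by (simp add: S_def)
    qed
    have AM: "A_sub p \<subseteq> M" using AS by (auto simp: A_sub_def S_def)
    show ?thesis
    proof (cases "M \<subseteq> A_sub p")
      case True thus ?thesis using AM by blast
    next
      case False
      then obtain x h where xh: "(x,h) \<in> M" "(x,h) \<notin> A_sub p" by auto
      have x: "x \<in> A_p p" and h: "h \<in> carrier (PSL2 p)" using xh(1) MG by (auto simp: G_carrier)
      have h1: "h \<noteq> \<one>\<^bsub>PSL2 p\<^esub>" using xh(2) x by (auto simp: A_sub_def)
      define Q where "Q = {X \<in> carrier (SL2 p). ((\<lambda>i. 0), cls X) \<in> M}"
      have clsin: "cls X \<in> carrier (PSL2 p)" if "X \<in> carrier (SL2 p)" for X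
        using that PSL2_carrier by blast
      obtain X0 where X0: "X0 \<in> carrier (SL2 p)" "h = cls X0" using h PSL2_elim by blast
      have QS: "carrier (SL2 p) \<subseteq> Q"
      proof (rule SL2_simple[of Q X0])
        show "Q \<subseteq> carrier (SL2 p)" by (auto simp: Q_def)
      next
        fix X Y assume "X \<in> Q" "Y \<in> Q"
        hence X: "X \<in> carrier (SL2 p)" "((\<lambda>i. 0), cls X) \<in> M" and Y: "Y \<in> carrier (SL2 p)" "((\<lambda>i. 0), cls Y) \<in> M"
          by (auto simp: Q_def)
        have "((\<lambda>i. 0), cls X) \<otimes>\<^bsub>G_p p\<^esub> ((\<lambda>i. 0), cls Y) \<in> M" using N.m_closed X(2) Y(2) by blast
        thus "mat_mult p X Y \<in> Q"
          using G_mult0[OF clsin[OF X(1)] clsin[OF Y(1)]] PSL2_mult[OF X(1) Y(1)] SL.m_closed[OF X(1) Y(1)]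
          by (simp add: Q_def SL2_mult)
      next
        fix X assume "X \<in> Q"
        hence X: "X \<in> carrier (SL2 p)" "((\<lambda>i. 0), cls X) \<in> M" by (auto simp: Q_def)
        have "inv\<^bsub>G_p p\<^esub> ((\<lambda>i. 0), cls X) \<in> M" using N.m_inv_closed X(2) by blast
        thus "inv\<^bsub>SL2 p\<^esub> X \<in> Q" using G_inv0[OF clsin[OF X(1)]] PSL2_inv[OF X(1)] SL.inv_closed[OF X(1)]
          by (simp add: Q_def)
      next
        fix X Y assume "X \<in> Q" and Y: "Y \<in> carrier (SL2 p)"
        hence X: "X \<in> carrier (SL2 p)" "((\<lambda>i. 0), cls X) \<in> M" by (auto simp: Q_def)
        have g: "((\<lambda>i. 0), cls Y) \<in> carrier (G_p p)" using clsin[OF Y] A_zero by (simp add: G_carrier)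
        have "((\<lambda>i. 0), cls Y) \<otimes>\<^bsub>G_p p\<^esub> ((\<lambda>i. 0), cls X) \<otimes>\<^bsub>G_p p\<^esub> inv\<^bsub>G_p p\<^esub> ((\<lambda>i. 0), cls Y) \<in> M"
          by (rule conj[OF g X(2)])
        moreover have "((\<lambda>i. 0), cls Y) \<otimes>\<^bsub>G_p p\<^esub> ((\<lambda>i. 0), cls X) \<otimes>\<^bsub>G_p p\<^esub> inv\<^bsub>G_p p\<^esub> ((\<lambda>i. 0), cls Y)
           = ((\<lambda>i. 0), cls (mat_mult p (mat_mult p Y X) (inv\<^bsub>SL2 p\<^esub> Y)))"
        proof -
          have YX: "mat_mult p Y X \<in> carrier (SL2 p)" using SL.m_closed[OF Y X(1)] by (simp add: SL2_mult)
          have iY: "inv\<^bsub>SL2 p\<^esub> Y \<in> carrier (SL2 p)" using SL.inv_closed[OF Y] .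
          have "((\<lambda>i. 0), cls Y) \<otimes>\<^bsub>G_p p\<^esub> ((\<lambda>i. 0), cls X) = ((\<lambda>i. 0), cls (mat_mult p Y X))"
            using G_mult0[OF clsin[OF Y] clsin[OF X(1)]] PSL2_mult[OF Y X(1)] by (simp add: SL2_mult)
          moreover have "inv\<^bsub>G_p p\<^esub> ((\<lambda>i. 0), cls Y) = ((\<lambda>i. 0), cls (inv\<^bsub>SL2 p\<^esub> Y))"
            using G_inv0[OF clsin[OF Y]] PSL2_inv[OF Y] by simp
          moreover have "((\<lambda>i. 0), cls (mat_mult p Y X)) \<otimes>\<^bsub>G_p p\<^esub> ((\<lambda>i. 0), cls (inv\<^bsub>SL2 p\<^esub> Y))
              = ((\<lambda>i. 0), cls (mat_mult p (mat_mult p Y X) (inv\<^bsub>SL2 p\<^esub> Y)))"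
            using G_mult0[OF clsin[OF YX] clsin[OF iY]] PSL2_mult[OF YX iY] by (simp add: SL2_mult)
          ultimately show ?thesis by simp
        qed
        ultimately show "mat_mult p (mat_mult p Y X) (inv\<^bsub>SL2 p\<^esub> Y) \<in> Q"
          using SL.m_closed[OF SL.m_closed[OF Y X(1)] SL.inv_closed[OF Y]] by (simp add: Q_def SL2_mult)
      next
        have "(x, \<one>\<^bsub>PSL2 p\<^esub>) \<in> M" using AM x by (auto simp: A_sub_def)
        hence "inv\<^bsub>G_p p\<^esub> (x, \<one>\<^bsub>PSL2 p\<^esub>) \<otimes>\<^bsub>G_p p\<^esub> (x,h) \<in> M" using N.m_closed N.m_inv_closed xh(1) by blast
        moreover have "inv\<^bsub>G_p p\<^esub> (x, \<one>\<^bsub>PSL2 p\<^esub>) \<otimes>\<^bsub>G_p p\<^esub> (x,h) = ((\<lambda>i. 0), h)"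
          unfolding G_invA[OF x] G_mult using pa_one[of x] A_out[OF x] h by (simp add: mod_simps)
        ultimately show "X0 \<in> Q" using X0 by (simp add: Q_def)
        show "X0 \<notin> centre_pm p" using h1 X0 cls_one_iff[OF X0(1)] PSL2_one SL2_one
          by (metis H.one_closed PSL2_def one_FactGroup)
      qed
      have "carrier (G_p p) \<subseteq> M"
      proof
        fix u assume u: "u \<in> carrier (G_p p)"
        obtain y k where u': "u = (y,k)" by (cases u)
        have y: "y \<in> A_p p" and k: "k \<in> carrier (PSL2 p)" using u u' by (auto simp: G_carrier)
        obtain Y where Y: "Y \<in> carrier (SL2 p)" "k = cls Y" using k PSL2_elim by blast
        have "((\<lambda>i. 0), k) \<in> M" using QS Y by (auto simp: Q_def)
        moreover have "(y, \<one>\<^bsub>PSL2 p\<^esub>) \<in> M" using AM y by (auto simp: A_sub_def)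
        ultimately have "(y, \<one>\<^bsub>PSL2 p\<^esub>) \<otimes>\<^bsub>G_p p\<^esub> ((\<lambda>i. 0), k) \<in> M" using N.m_closed by blast
        thus "u \<in> M" using G_multA0[OF y k] u' by simp
      qed
      thus ?thesis using MG by blast
    qed
  next
    case False
    hence S0: "a \<in> S \<Longrightarrow> a = (\<lambda>i. 0)" for a by blast
    have "M \<subseteq> {\<one>\<^bsub>G_p p\<^esub>}"
    proof
      fix n assume nM: "n \<in> M"
      obtain x h where n': "n = (x,h)" by (cases n)
      have n: "n \<in> carrier (G_p p)" using nM MG by blast
      have x: "x \<in> A_p p" and h: "h \<in> carrier (PSL2 p)" using n n' by (auto simp: G_carrier)
      have key: "a i = a (psl_act p (inv\<^bsub>PSL2 p\<^esub> h) i)" if a: "a \<in> A_p p" and i: "i \<le> p" for a i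
      proof -
        define a' where "a' = (\<lambda>i. (- a i) mod 3)"
        have a'A: "a' \<in> A_p p" unfolding a'_def by (rule A_neg[OF a])
        have ag: "(a, \<one>\<^bsub>PSL2 p\<^esub>) \<in> carrier (G_p p)" using a by (simp add: G_carrier)
        have ia: "inv\<^bsub>G_p p\<^esub> (a, \<one>\<^bsub>PSL2 p\<^esub>) = (a', \<one>\<^bsub>PSL2 p\<^esub>)" by (simp add: G_invA[OF a] a'_def)
        have c1: "(a, \<one>\<^bsub>PSL2 p\<^esub>) \<otimes>\<^bsub>G_p p\<^esub> n \<otimes>\<^bsub>G_p p\<^esub> inv\<^bsub>G_p p\<^esub> (a, \<one>\<^bsub>PSL2 p\<^esub>) \<in> M"
          by (rule conj[OF ag nM])
        have c2: "(a, \<one>\<^bsub>PSL2 p\<^esub>) \<otimes>\<^bsub>G_p p\<^esub> n \<otimes>\<^bsub>G_p p\<^esub> inv\<^bsub>G_p p\<^esub> (a, \<one>\<^bsub>PSL2 p\<^esub>) \<otimes>\<^bsub>G_p p\<^esub> inv\<^bsub>G_p p\<^esub> n \<in> M"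
          using N.m_closed[OF c1 N.m_inv_closed[OF nM]] .
        have "(a, \<one>\<^bsub>PSL2 p\<^esub>) \<otimes>\<^bsub>G_p p\<^esub> n \<otimes>\<^bsub>G_p p\<^esub> inv\<^bsub>G_p p\<^esub> (a, \<one>\<^bsub>PSL2 p\<^esub>) \<otimes>\<^bsub>G_p p\<^esub> inv\<^bsub>G_p p\<^esub> n
           = (a, \<one>\<^bsub>PSL2 p\<^esub>) \<otimes>\<^bsub>G_p p\<^esub> (n \<otimes>\<^bsub>G_p p\<^esub> (a', \<one>\<^bsub>PSL2 p\<^esub>) \<otimes>\<^bsub>G_p p\<^esub> inv\<^bsub>G_p p\<^esub> n)"
        proof -
          have a'g: "(a', \<one>\<^bsub>PSL2 p\<^esub>) \<in> carrier (G_p p)" using a'A by (simp add: G_carrier)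
          show ?thesis using ag n a'g G.inv_closed[OF n] by (simp add: ia G.m_assoc)
        qed
        also have "\<dots> = (a, \<one>\<^bsub>PSL2 p\<^esub>) \<otimes>\<^bsub>G_p p\<^esub> (perm_act p h a', \<one>\<^bsub>PSL2 p\<^esub>)"
          using G_conjA[OF n a'A] n' by simp
        also have "\<dots> = ((\<lambda>i. (a i + perm_act p h a' i) mod 3), \<one>\<^bsub>PSL2 p\<^esub>)"
          by (rule G_multA[OF a pa_A[OF h a'A]])
        finally have "(\<lambda>i. (a i + perm_act p h a' i) mod 3) \<in> S"
          using c2 A_add[OF a pa_A[OF h a'A]] by (simp add: S_def)
        hence "(a i + perm_act p h a' i) mod 3 = 0" using S0 by metis
        hence "(a i - a (psl_act p (inv\<^bsub>PSL2 p\<^esub> h) i)) mod 3 = 0" using i by (simp add: pa_app a'_def mod_simps)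
        hence "3 dvd (a i - a (psl_act p (inv\<^bsub>PSL2 p\<^esub> h) i))" by presburger
        moreover have "0 \<le> a i" "a i < 3" "0 \<le> a (psl_act p (inv\<^bsub>PSL2 p\<^esub> h) i)" "a (psl_act p (inv\<^bsub>PSL2 p\<^esub> h) i) < 3"
          using A_vals[OF a] by auto
        ultimately show ?thesis by presburger
      qed
      have fx: "\<forall>i\<le>p. psl_act p (inv\<^bsub>PSL2 p\<^esub> h) i = i"
      proof (intro allI impI)
        fix i assume i: "i \<le> p"
        define m where "m = (if i = 0 then 1 else (0::nat))"
        have m: "m \<le> p" "m \<noteq> i" using p_ge7 by (auto simp: m_def)
        define a where "a = (\<lambda>k. if k = i then 1 else if k = m then 2 else (0::int))"
        have aA: "a \<in> A_p p"
        proof (rule A_I)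
          show "\<And>k. 0 \<le> a k \<and> a k < 3" by (simp add: a_def)
          show "\<And>k. p < k \<Longrightarrow> a k = 0" using i m by (auto simp: a_def)
          have "(\<Sum>k\<le>p. a k) = (\<Sum>k\<in>{i,m}. a k)"
            by (rule sum.mono_neutral_right) (use i m in \<open>auto simp: a_def\<close>)
          also have "\<dots> = 3" using m by (simp add: a_def)
          finally show "(\<Sum>k\<le>p. a k) mod 3 = 0" by simp
        qed
        have "a (psl_act p (inv\<^bsub>PSL2 p\<^esub> h) i) = 1" using key[OF aA i] by (simp add: a_def)
        thus "psl_act p (inv\<^bsub>PSL2 p\<^esub> h) i = i" by (auto simp: a_def split: if_splits)
      qed
      have "inv\<^bsub>PSL2 p\<^esub> h = \<one>\<^bsub>PSL2 p\<^esub>" by (rule faithful[OF H.inv_closed[OF h] fx])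
      hence h1: "h = \<one>\<^bsub>PSL2 p\<^esub>" using H.inv_inv[OF h] by (metis H.inv_one)
      hence "x \<in> S" using nM n' x by (simp add: S_def)
      hence "x = (\<lambda>i. 0)" by (rule S0)
      thus "n \<in> {\<one>\<^bsub>G_p p\<^esub>}" using n' h1 by (simp add: G_one)
    qed
    thus ?thesis using N.one_closed by blast
  qed
qed

end


context pp begin

lemma H_nonab: "\<exists>h\<in>carrier (PSL2 p). \<exists>k\<in>carrier (PSL2 p).
  h \<otimes>\<^bsub>PSL2 p\<^esub> k \<otimes>\<^bsub>PSL2 p\<^esub> inv\<^bsub>PSL2 p\<^esub> h \<otimes>\<^bsub>PSL2 p\<^esub> inv\<^bsub>PSL2 p\<^esub> k \<noteq> \<one>\<^bsub>PSL2 p\<^esub>"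
proof -
  interpret SL: group "SL2 p" by (rule SL2_group)
  define T where "T = mk 1 1 0 1"
  define W where "W = mk 0 (-1) 1 0"
  have dT: "int p dvd (1*1 - 0*1 - 1)" by simp
  have dW: "int p dvd (0*0 - 1*(-1) - 1)" by simp
  have T: "T \<in> carrier (SL2 p)" unfolding T_def using dT mk_in by blast
  have W: "W \<in> carrier (SL2 p)" unfolding W_def using dW mk_in by blast
  have iT: "inv\<^bsub>SL2 p\<^esub> T = mk 1 (-1) (-0) 1" unfolding T_def by (rule SL2_inv[OF dT])
  have iW: "inv\<^bsub>SL2 p\<^esub> W = mk 0 (-(-1)) (-1) 0" unfolding W_def by (rule SL2_inv[OF dW])
  have cT: "cls T \<in> carrier (PSL2 p)" and cW: "cls W \<in> carrier (PSL2 p)" using T W PSL2_carrier by auto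
  define C where "C = T \<otimes>\<^bsub>SL2 p\<^esub> W \<otimes>\<^bsub>SL2 p\<^esub> inv\<^bsub>SL2 p\<^esub> T \<otimes>\<^bsub>SL2 p\<^esub> inv\<^bsub>SL2 p\<^esub> W"
  have C: "C \<in> carrier (SL2 p)" unfolding C_def using T W by simp
  have "cls T \<otimes>\<^bsub>PSL2 p\<^esub> cls W \<otimes>\<^bsub>PSL2 p\<^esub> inv\<^bsub>PSL2 p\<^esub> (cls T) \<otimes>\<^bsub>PSL2 p\<^esub> inv\<^bsub>PSL2 p\<^esub> (cls W) = cls C"
    unfolding C_def using T W by (simp add: PSL2_inv PSL2_mult)
  moreover have "C = mk 2 1 1 1" unfolding C_def iT iW unfolding T_def W_def SL2_mult mk_mult by simp
  moreover have "mk 2 1 1 1 \<notin> centre_pm p" using P_not_unit by (auto simp: centre_eq scal_def mk_eq)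
  ultimately have "cls T \<otimes>\<^bsub>PSL2 p\<^esub> cls W \<otimes>\<^bsub>PSL2 p\<^esub> inv\<^bsub>PSL2 p\<^esub> (cls T) \<otimes>\<^bsub>PSL2 p\<^esub> inv\<^bsub>PSL2 p\<^esub> (cls W) \<noteq> \<one>\<^bsub>PSL2 p\<^esub>"
    using cls_one_iff[OF C] by (simp add: PSL2_def)
  thus ?thesis using cT cW by blast
qed

lemma A_noncentral: "\<exists>g\<in>carrier (G_p p). \<exists>a\<in>A_p p.
  g \<otimes>\<^bsub>G_p p\<^esub> (a, \<one>\<^bsub>PSL2 p\<^esub>) \<otimes>\<^bsub>G_p p\<^esub> inv\<^bsub>G_p p\<^esub> g \<noteq> (a, \<one>\<^bsub>PSL2 p\<^esub>)"
proof -
  define V where "V = (\<lambda>k::nat. if k = 0 then 1 else if k = 1 then 2 else (0::int))"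
  have p1: "1 < p" using p_ge7 by simp
  have VA: "V \<in> A_p p"
  proof (rule A_I)
    show "\<And>k. 0 \<le> V k \<and> V k < 3" by (simp add: V_def)
    show "\<And>k. p < k \<Longrightarrow> V k = 0" using p1 by (auto simp: V_def)
    have "(\<Sum>k\<le>p. V k) = (\<Sum>k\<in>{0,1}. V k)"
      by (rule sum.mono_neutral_right) (use p1 in \<open>auto simp: V_def\<close>)
    also have "\<dots> = 3" by (simp add: V_def)
    finally show "(\<Sum>k\<le>p. V k) mod 3 = 0" by simp
  qed
  define g where "g = ((\<lambda>i::nat. 0::int), tr 1)"
  have g: "g \<in> carrier (G_p p)" using tr_in A_zero by (simp add: g_def G_carrier)
  have "perm_act p (tr 1) V 1 = V (nat ((1 + - 1) mod int p))"
    using p1 by (simp add: pa_app tr_inv tr_act)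
  hence "perm_act p (tr 1) V 1 = 1" by (simp add: V_def)
  hence "perm_act p (tr 1) V \<noteq> V" by (auto simp: V_def)
  hence "g \<otimes>\<^bsub>G_p p\<^esub> (V, \<one>\<^bsub>PSL2 p\<^esub>) \<otimes>\<^bsub>G_p p\<^esub> inv\<^bsub>G_p p\<^esub> g \<noteq> (V, \<one>\<^bsub>PSL2 p\<^esub>)"
    using G_conjA[OF g VA] by (simp add: g_def)
  thus ?thesis using g VA by blast
qed

lemma main:
  fixes K :: "('k, 'm) monoid_scheme"
    and N :: "(((nat \<Rightarrow> int) \<times> mat2 set) \<times> 'k) set"
  assumes grpK: "group K"
    and NS: "subgroup N (G_p p \<times>\<times> K)"
    and hyp: "\<forall>g \<in> carrier (G_p p). \<forall>n \<in> N.
           (g, \<one>\<^bsub>K\<^esub>) \<otimes>\<^bsub>G_p p \<times>\<times> K\<^esub> n \<otimes>\<^bsub>G_p p \<times>\<times> K\<^esub> inv\<^bsub>G_p p \<times>\<times> K\<^esub> (g, \<one>\<^bsub>K\<^esub>) \<in> N"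
  shows "\<exists>L. subgroup L K \<and>
           (N = {\<one>\<^bsub>G_p p\<^esub>} \<times> L \<or> N = A_sub p \<times> L \<or> N = carrier (G_p p) \<times> L)"
proof -
  interpret G: group "G_p p" by (rule G_group)
  interpret H: group "PSL2 p" by (rule PSL2_group)
  interpret K: group K by (rule grpK)
  interpret GK: group "G_p p \<times>\<times> K" by (rule DirProd_group[OF G_group grpK])
  interpret NS: subgroup N "G_p p \<times>\<times> K" by (rule NS)
  have Nsub: "N \<subseteq> carrier (G_p p) \<times> carrier K" using NS.subset by simp
  have one: "(\<one>\<^bsub>G_p p\<^esub>, \<one>\<^bsub>K\<^esub>) \<in> N" using NS.one_closed by simp
  have Nmul: "(g, k) \<in> N \<Longrightarrow> (g', k') \<in> N \<Longrightarrow> (g \<otimes>\<^bsub>G_p p\<^esub> g', k \<otimes>\<^bsub>K\<^esub> k') \<in> N" for g k g' k'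
    using NS.m_closed by fastforce
  have Ninv: "(g, k) \<in> N \<Longrightarrow> (inv\<^bsub>G_p p\<^esub> g, inv\<^bsub>K\<^esub> k) \<in> N" for g k
  proof -
    assume gk: "(g,k) \<in> N"
    hence "g \<in> carrier (G_p p)" "k \<in> carrier K" using Nsub by auto
    thus ?thesis using NS.m_inv_closed[OF gk] inv_DirProd[OF G_group grpK] by simp
  qed
  have hyp': "(g \<otimes>\<^bsub>G_p p\<^esub> a \<otimes>\<^bsub>G_p p\<^esub> inv\<^bsub>G_p p\<^esub> g, k) \<in> N"
    if g: "g \<in> carrier (G_p p)" and ak: "(a,k) \<in> N" for g a k
  proof -
    have k: "k \<in> carrier K" and a: "a \<in> carrier (G_p p)" using ak Nsub by auto
    have "(g, \<one>\<^bsub>K\<^esub>) \<otimes>\<^bsub>G_p p \<times>\<times> K\<^esub> (a,k) \<otimes>\<^bsub>G_p p \<times>\<times> K\<^esub> inv\<^bsub>G_p p \<times>\<times> K\<^esub> (g, \<one>\<^bsub>K\<^esub>) \<in> N"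
      using hyp g ak by blast
    thus ?thesis using inv_DirProd[OF G_group grpK g K.one_closed] k by simp
  qed
  define N1 where "N1 = {g. (g, \<one>\<^bsub>K\<^esub>) \<in> N}"
  define P where "P = {g. \<exists>k. (g, k) \<in> N}"
  define L where "L = {k. (\<one>\<^bsub>G_p p\<^esub>, k) \<in> N}"
  have N1n: "N1 \<lhd> G_p p"
  proof -
    have "subgroup N1 (G_p p)"
    proof (rule G.subgroupI)
      show "N1 \<subseteq> carrier (G_p p)" using Nsub by (auto simp: N1_def)
      have "\<one>\<^bsub>G_p p\<^esub> \<in> N1" using one by (simp add: N1_def)
      thus "N1 \<noteq> {}" by blast
    next
      fix a assume "a \<in> N1" thus "inv\<^bsub>G_p p\<^esub> a \<in> N1" using Ninv by (fastforce simp: N1_def)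
    next
      fix a b assume "a \<in> N1" "b \<in> N1" thus "a \<otimes>\<^bsub>G_p p\<^esub> b \<in> N1" using Nmul by (fastforce simp: N1_def)
    qed
    moreover have "\<forall>x\<in>carrier (G_p p). \<forall>h\<in>N1. x \<otimes>\<^bsub>G_p p\<^esub> h \<otimes>\<^bsub>G_p p\<^esub> inv\<^bsub>G_p p\<^esub> x \<in> N1"
      using hyp' by (auto simp: N1_def)
    ultimately show ?thesis by (intro G.normal_inv_iff[THEN iffD2] conjI)
  qed
  have Pn: "P \<lhd> G_p p"
  proof -
    have "subgroup P (G_p p)"
    proof (rule G.subgroupI)
      show "P \<subseteq> carrier (G_p p)" using Nsub by (auto simp: P_def)
      have "\<one>\<^bsub>G_p p\<^esub> \<in> P" using one unfolding P_def by blast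
      thus "P \<noteq> {}" by blast
    next
      fix a assume "a \<in> P"
      then obtain k where "(a,k) \<in> N" unfolding P_def by blast
      thus "inv\<^bsub>G_p p\<^esub> a \<in> P" using Ninv unfolding P_def by blast
    next
      fix a b assume "a \<in> P" "b \<in> P"
      then obtain k k' where "(a,k) \<in> N" "(b,k') \<in> N" unfolding P_def by blast
      thus "a \<otimes>\<^bsub>G_p p\<^esub> b \<in> P" using Nmul unfolding P_def by blast
    qed
    moreover have "\<forall>x\<in>carrier (G_p p). \<forall>h\<in>P. x \<otimes>\<^bsub>G_p p\<^esub> h \<otimes>\<^bsub>G_p p\<^esub> inv\<^bsub>G_p p\<^esub> x \<in> P"
      using hyp' unfolding P_def by blast
    ultimately show ?thesis by (intro G.normal_inv_iff[THEN iffD2] conjI)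
  qed
  have Ls: "subgroup L K"
  proof (rule K.subgroupI)
    show "L \<subseteq> carrier K" using Nsub by (auto simp: L_def)
    have "\<one>\<^bsub>K\<^esub> \<in> L" using one by (simp add: L_def)
    thus "L \<noteq> {}" by blast
  next
    fix a assume "a \<in> L" thus "inv\<^bsub>K\<^esub> a \<in> L" using Ninv by (fastforce simp: L_def)
  next
    fix a b assume "a \<in> L" "b \<in> L" thus "a \<otimes>\<^bsub>K\<^esub> b \<in> L" using Nmul by (fastforce simp: L_def)
  qed
  have comm: "g \<otimes>\<^bsub>G_p p\<^esub> a \<otimes>\<^bsub>G_p p\<^esub> inv\<^bsub>G_p p\<^esub> g \<otimes>\<^bsub>G_p p\<^esub> inv\<^bsub>G_p p\<^esub> a \<in> N1"
    if a: "a \<in> P" and g: "g \<in> carrier (G_p p)" for a g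
  proof -
    obtain k where ak: "(a,k) \<in> N" using a by (auto simp: P_def)
    have k: "k \<in> carrier K" using ak Nsub by auto
    have "(g \<otimes>\<^bsub>G_p p\<^esub> a \<otimes>\<^bsub>G_p p\<^esub> inv\<^bsub>G_p p\<^esub> g \<otimes>\<^bsub>G_p p\<^esub> inv\<^bsub>G_p p\<^esub> a, k \<otimes>\<^bsub>K\<^esub> inv\<^bsub>K\<^esub> k) \<in> N"
      by (rule Nmul[OF hyp'[OF g ak] Ninv[OF ak]])
    thus ?thesis using k by (simp add: N1_def)
  qed
  have N1P: "N1 \<subseteq> P" by (auto simp: N1_def P_def)
  have PG: "P \<subseteq> carrier (G_p p)" using Nsub by (auto simp: P_def)
  obtain g0 a0 where g0: "g0 \<in> carrier (G_p p)" and a0: "a0 \<in> A_p p"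
    and ga0: "g0 \<otimes>\<^bsub>G_p p\<^esub> (a0, \<one>\<^bsub>PSL2 p\<^esub>) \<otimes>\<^bsub>G_p p\<^esub> inv\<^bsub>G_p p\<^esub> g0 \<noteq> (a0, \<one>\<^bsub>PSL2 p\<^esub>)"
    using A_noncentral by blast
  have a0g: "(a0, \<one>\<^bsub>PSL2 p\<^esub>) \<in> carrier (G_p p)" using a0 by (simp add: G_carrier)
  have a0A: "(a0, \<one>\<^bsub>PSL2 p\<^esub>) \<in> A_sub p" using a0 by (simp add: A_sub_def)
  have a0n1: "(a0, \<one>\<^bsub>PSL2 p\<^esub>) \<noteq> \<one>\<^bsub>G_p p\<^esub>" using ga0 g0 by auto
  have N1eqP: "N1 = P"
  proof -
    have c1: "N1 = {\<one>\<^bsub>G_p p\<^esub>} \<or> N1 = A_sub p \<or> N1 = carrier (G_p p)" by (rule normal_class[OF N1n])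
    have c2: "P = {\<one>\<^bsub>G_p p\<^esub>} \<or> P = A_sub p \<or> P = carrier (G_p p)" by (rule normal_class[OF Pn])
    have AG: "A_sub p \<subseteq> carrier (G_p p)" using H.one_closed by (auto simp: A_sub_def G_carrier)
    show ?thesis
    proof (cases "N1 = carrier (G_p p)")
      case True thus ?thesis using N1P PG by blast
    next
      case F1: False
      show ?thesis
      proof (cases "N1 = A_sub p")
        case True
        have "P \<noteq> carrier (G_p p)"
        proof
          assume Pc: "P = carrier (G_p p)"
          obtain h k where h: "h \<in> carrier (PSL2 p)" and k: "k \<in> carrier (PSL2 p)"
            and hk: "h \<otimes>\<^bsub>PSL2 p\<^esub> k \<otimes>\<^bsub>PSL2 p\<^esub> inv\<^bsub>PSL2 p\<^esub> h \<otimes>\<^bsub>PSL2 p\<^esub> inv\<^bsub>PSL2 p\<^esub> k \<noteq> \<one>\<^bsub>PSL2 p\<^esub>"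
            using H_nonab by blast
          have hg: "((\<lambda>i. 0), h) \<in> carrier (G_p p)" and kg: "((\<lambda>i. 0), k) \<in> carrier (G_p p)"
            using h k A_zero by (simp_all add: G_carrier)
          have "((\<lambda>i. 0), h) \<otimes>\<^bsub>G_p p\<^esub> ((\<lambda>i. 0), k) \<otimes>\<^bsub>G_p p\<^esub> inv\<^bsub>G_p p\<^esub> ((\<lambda>i. 0), h) \<otimes>\<^bsub>G_p p\<^esub> inv\<^bsub>G_p p\<^esub> ((\<lambda>i. 0), k) \<in> N1"
            using comm[OF _ hg] kg Pc by blast
          moreover have "((\<lambda>i. 0), h) \<otimes>\<^bsub>G_p p\<^esub> ((\<lambda>i. 0), k) \<otimes>\<^bsub>G_p p\<^esub> inv\<^bsub>G_p p\<^esub> ((\<lambda>i. 0), h) \<otimes>\<^bsub>G_p p\<^esub> inv\<^bsub>G_p p\<^esub> ((\<lambda>i. 0), k)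
             = ((\<lambda>i. 0), h \<otimes>\<^bsub>PSL2 p\<^esub> k \<otimes>\<^bsub>PSL2 p\<^esub> inv\<^bsub>PSL2 p\<^esub> h \<otimes>\<^bsub>PSL2 p\<^esub> inv\<^bsub>PSL2 p\<^esub> k)"
            using h k by (simp add: G_inv0 G_mult0)
          ultimately show False using True hk by (simp add: A_sub_def)
        qed
        moreover have "P \<noteq> {\<one>\<^bsub>G_p p\<^esub>}" using True N1P a0A a0n1 by blast
        ultimately show ?thesis using c2 True by blast
      next
        case F2: False
        hence N11: "N1 = {\<one>\<^bsub>G_p p\<^esub>}" using c1 F1 by blast
        have "P = {\<one>\<^bsub>G_p p\<^esub>}"
        proof (rule ccontr)
          assume "P \<noteq> {\<one>\<^bsub>G_p p\<^esub>}"
          hence "A_sub p \<subseteq> P" using c2 AG by blast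
          hence "(a0, \<one>\<^bsub>PSL2 p\<^esub>) \<in> P" using a0A by blast
          hence "g0 \<otimes>\<^bsub>G_p p\<^esub> (a0, \<one>\<^bsub>PSL2 p\<^esub>) \<otimes>\<^bsub>G_p p\<^esub> inv\<^bsub>G_p p\<^esub> g0 \<otimes>\<^bsub>G_p p\<^esub> inv\<^bsub>G_p p\<^esub> (a0, \<one>\<^bsub>PSL2 p\<^esub>) = \<one>\<^bsub>G_p p\<^esub>"
            using comm[OF _ g0] N11 by blast
          moreover have Xc: "g0 \<otimes>\<^bsub>G_p p\<^esub> (a0, \<one>\<^bsub>PSL2 p\<^esub>) \<otimes>\<^bsub>G_p p\<^esub> inv\<^bsub>G_p p\<^esub> g0 \<in> carrier (G_p p)"
            using g0 a0g by simp
          ultimately have "inv\<^bsub>G_p p\<^esub> (inv\<^bsub>G_p p\<^esub> (a0, \<one>\<^bsub>PSL2 p\<^esub>)) = g0 \<otimes>\<^bsub>G_p p\<^esub> (a0, \<one>\<^bsub>PSL2 p\<^esub>) \<otimes>\<^bsub>G_p p\<^esub> inv\<^bsub>G_p p\<^esub> g0"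
            by (intro G.inv_equality G.inv_closed a0g)
          thus False using ga0 a0g by simp
        qed
        thus ?thesis using N11 by simp
      qed
    qed
  qed
  have "N = N1 \<times> L"
  proof
    show "N \<subseteq> N1 \<times> L"
    proof
      fix n assume nN: "n \<in> N"
      obtain g k where n: "n = (g,k)" by (cases n)
      have gk: "g \<in> carrier (G_p p)" "k \<in> carrier K" using nN n Nsub by auto
      have "g \<in> N1" using nN n N1eqP by (auto simp: P_def)
      hence g1: "(g, \<one>\<^bsub>K\<^esub>) \<in> N" by (simp add: N1_def)
      have "(inv\<^bsub>G_p p\<^esub> g \<otimes>\<^bsub>G_p p\<^esub> g, inv\<^bsub>K\<^esub> \<one>\<^bsub>K\<^esub> \<otimes>\<^bsub>K\<^esub> k) \<in> N"
        using Nmul[OF Ninv[OF g1] nN[unfolded n]] .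
      hence "k \<in> L" using gk by (simp add: L_def)
      thus "n \<in> N1 \<times> L" using \<open>g \<in> N1\<close> n by simp
    qed
  next
    show "N1 \<times> L \<subseteq> N"
    proof
      fix n assume "n \<in> N1 \<times> L"
      then obtain g k where n: "n = (g,k)" "(g, \<one>\<^bsub>K\<^esub>) \<in> N" "(\<one>\<^bsub>G_p p\<^esub>, k) \<in> N"
        by (auto simp: N1_def L_def)
      have "g \<in> carrier (G_p p)" "k \<in> carrier K" using n Nsub by auto
      thus "n \<in> N" using Nmul[OF n(2) n(3)] n(1) by simp
    qed
  qed
  moreover have "N1 = {\<one>\<^bsub>G_p p\<^esub>} \<or> N1 = A_sub p \<or> N1 = carrier (G_p p)" by (rule normal_class[OF N1n])
  ultimately show ?thesis using Ls by blast
qed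

end

theorem lemma3p2:
  fixes p :: nat and K :: "('k, 'm) monoid_scheme"
    and N :: "(((nat \<Rightarrow> int) \<times> mat2 set) \<times> 'k) set"
  assumes "prime p" and "p mod 3 = 1"
    and "group K"
    and "subgroup N (G_p p \<times>\<times> K)"
    and "\<forall>g \<in> carrier (G_p p). \<forall>n \<in> N.
           (g, \<one>\<^bsub>K\<^esub>) \<otimes>\<^bsub>G_p p \<times>\<times> K\<^esub> n \<otimes>\<^bsub>G_p p \<times>\<times> K\<^esub> inv\<^bsub>G_p p \<times>\<times> K\<^esub> (g, \<one>\<^bsub>K\<^esub>) \<in> N"
  shows "\<exists>L. subgroup L K \<and>
           (N = {\<one>\<^bsub>G_p p\<^esub>} \<times> L \<or> N = A_sub p \<times> L \<or> N = carrier (G_p p) \<times> L)"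
proof -
  interpret pp p using assms(1,2) by (unfold_locales)
  show ?thesis by (rule main[OF assms(3,4,5)])
qed


end
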